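(* Let $H$ be a quasi-bialgebra over a field $k$, let $A$ be a left $H$-module algebra and let $B=A^{H}$ be its subalgebra of invariants. For a left $B$-module $M$, regard $A\otimes_B M$ as a left $(H,A)$-Hopf module via $h(a\otimes_B m)=h\cdot a\otimes_B m$ and $b(a\otimes_B m)=ba\otimes_B m$ for $h\in H$ and $a,b\in A$. For a left $(H,A)$-Hopf module $N$, regard $N^{H}=\{n\in N\mid hn=\varepsilon(h)n \text{ for all } h\in H\}$ as a left $B$-module. Then the functor $A\otimes_B(-):{}_B\mathcal{M}\to{}_A({}_H\mathcal{M})$ is left adjoint to the functor $(-)^{H}:{}_A({}_H\mathcal{M})\to{}_B\mathcal{M}$. The adjunction bijection $\mathrm{Hom}_{{}_A({}_H\mathcal{M})}(A\otimes_B M,N)\cong \mathrm{Hom}_B(M,N^H)$ is given by $f\mapsto (m\mapsto f(1_A\otimes_B m))$, with inverse $g\mapsto (a\otimes_B m\mapsto a\,g(m))$.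
   Context: A quasi-bialgebra $(H,\Delta,\varepsilon,\phi)$ over a field $k$ consists of an associative unital $k$-algebra $H$, algebra morphisms $\Delta:H\to H\otimes H$ and $\varepsilon:H\to k$, and an invertible element $\phi\in H\otimes H\otimes H$ satisfying the following conditions: - $\phi(\Delta\otimes I)\Delta(h)\phi^{-1}=(I\otimes\Delta)\Delta(h)$ for all $h\in H$; - $(I\otimes\varepsilon)\Delta(h)=(\varepsilon\otimes I)\Delta(h)=h$ for all $h\in H$; - $(I\otimes I\otimes\Delta)(\phi)(\Delta\otimes I\otimes I)(\phi)=(1\otimes\phi)(I\otimes\Delta\otimes I)(\phi)(\phi\otimes 1)$; - $(I\otimes\varepsilon\otimes I)(\phi)=1\otimes 1$. Notation: $\Delta(h)=h_1\otimes h_2$ with summation suppressed, $\phi=X^1\otimes X^2\otimes X^3$, and $\phi^{-1}=x^1\otimes x^2\otimes x^3$. A left $H$-module algebra is a left $H$-module $A$ (action $h\cdot a$) with a bilinear multiplication, which need not be associative, and a unit $1_A$, such that for all $a,b,c\in A$ and $h\in H$: - $(ab)c=(X^1\cdot a)[(X^2\cdot b)(X^3\cdot c)]$; - $h\cdot(ab)=(h_1\cdot a)(h_2\cdot b)$; - $h\cdot 1_A=\varepsilon(h)1_A$. The subalgebra of invariants is $B=A^H=\{a\in A\mid h\cdot a=\varepsilon(h)a\ \forall h\in H\}$. It is an associative algebra, and $A$ is a $B$-bimodule by multiplication. A left $(H,A)$-Hopf module is a left $H$-module $M$ together with a map $A\otimes M\to M$, $a\otimes m\mapsto am$, such that for all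 $h\in H$, $a,b\in A$, $m\in M$: - $(ab)m=(X^1\cdot a)[(X^2\cdot b)(X^3m)]$; - $h(am)=(h_1\cdot a)(h_2m)$; - $1_Am=m$. The category ${}_A({}_H\mathcal{M})$ has these objects, with morphisms the $H$-linear maps preserving the $A$-action. *)

theory Defs
  imports Main "HOL-Library.FuncSet"
begin

text \<open>A formal sum (element of the free abelian group on a set of generators of type 'x)
 is represented by a list of generators; an element of the free abelian group is a finitely
 supported function 'x => int.  A tensor product is the quotient of the free abelian group
 by the subgroup generated by a set of relations.\<close>

definition delta :: "'x \<Rightarrow> 'x \<Rightarrow> int" where
  "delta x = (\<lambda>y. if y = x then 1 else 0)"

inductive_set subgrp_gen :: "('x \<Rightarrow> int) set \<Rightarrow> ('x \<Rightarrow> int) set" for G where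
  sg_zero: "(\<lambda>_. 0) \<in> subgrp_gen G"
| sg_gen: "g \<in> G \<Longrightarrow> g \<in> subgrp_gen G"
| sg_diff: "f \<in> subgrp_gen G \<Longrightarrow> g \<in> subgrp_gen G \<Longrightarrow> (\<lambda>x. f x - g x) \<in> subgrp_gen G"

definition fsum :: "'x list \<Rightarrow> 'x \<Rightarrow> int" where
  "fsum xs = (\<lambda>y. int (count_list xs y))"

definition teq :: "('x \<Rightarrow> int) set \<Rightarrow> 'x list \<Rightarrow> 'x list \<Rightarrow> bool" where
  "teq G xs ys \<longleftrightarrow> (\<lambda>y. fsum xs y - fsum ys y) \<in> subgrp_gen G"

text \<open>Relations defining the n-fold tensor power of H over k (simple tensors = words of length n):
 additivity in each slot, and k-scalars may be moved between slots.\<close>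
definition ktens_rel :: "('k \<Rightarrow> 'h::ab_group_add \<Rightarrow> 'h) \<Rightarrow> nat \<Rightarrow> ('h list \<Rightarrow> int) set" where
  "ktens_rel sc n =
     {(\<lambda>y. delta (w[i := a + b]) y - delta (w[i := a]) y - delta (w[i := b]) y) | w i a b.
          length w = n \<and> i < n}
   \<union> {(\<lambda>y. delta (w[i := sc c (w ! i)]) y - delta (w[j := sc c (w ! j)]) y) | w i j c.
          length w = n \<and> i < n \<and> j < n}"

definition kteq :: "('k \<Rightarrow> 'h::ab_group_add \<Rightarrow> 'h) \<Rightarrow> nat \<Rightarrow> 'h list list \<Rightarrow> 'h list list \<Rightarrow> bool" where
  "kteq sc n xs ys \<longleftrightarrow> teq (ktens_rel sc n) xs ys"

text \<open>Componentwise product in the algebra H\<otimes>...\<otimes>H, on formal sums.\<close>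
definition tmul :: "'h::times list list \<Rightarrow> 'h list list \<Rightarrow> 'h list list" where
  "tmul xs ys = concat (map (\<lambda>u. map (\<lambda>v. map2 (*) u v) ys) xs)"

text \<open>Apply a map F : H -> H\<otimes>...\<otimes>H (e.g. the comultiplication) in slot i.\<close>
definition tapply :: "nat \<Rightarrow> ('h \<Rightarrow> 'h list list) \<Rightarrow> 'h list list \<Rightarrow> 'h list list" where
  "tapply i F xs = concat (map (\<lambda>w. map (\<lambda>v. take i w @ v @ drop (Suc i) w) (F (w ! i))) xs)"

definition gsum :: "('x \<Rightarrow> 'x \<Rightarrow> 'x) \<Rightarrow> 'x \<Rightarrow> 'x list \<Rightarrow> 'x" where
  "gsum p z xs = foldr p xs z"

definition abgrp :: "'x set \<Rightarrow> ('x \<Rightarrow> 'x \<Rightarrow> 'x) \<Rightarrow> 'x \<Rightarrow> bool" where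
  "abgrp S p z \<longleftrightarrow> z \<in> S \<and> (\<forall>x\<in>S. \<forall>y\<in>S. p x y \<in> S)
     \<and> (\<forall>x\<in>S. \<forall>y\<in>S. \<forall>w\<in>S. p (p x y) w = p x (p y w))
     \<and> (\<forall>x\<in>S. \<forall>y\<in>S. p x y = p y x) \<and> (\<forall>x\<in>S. p z x = x)
     \<and> (\<forall>x\<in>S. \<exists>y\<in>S. p x y = z)"

definition kvs :: "'x set \<Rightarrow> ('x \<Rightarrow> 'x \<Rightarrow> 'x) \<Rightarrow> 'x \<Rightarrow> ('k::field \<Rightarrow> 'x \<Rightarrow> 'x) \<Rightarrow> bool" where
  "kvs S p z s \<longleftrightarrow> abgrp S p z \<and> (\<forall>c. \<forall>x\<in>S. s c x \<in> S)
     \<and> (\<forall>c. \<forall>x\<in>S. \<forall>y\<in>S. s c (p x y) = p (s c x) (s c y))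
     \<and> (\<forall>c d. \<forall>x\<in>S. s (c + d) x = p (s c x) (s d x))
     \<and> (\<forall>c d. \<forall>x\<in>S. s (c * d) x = s c (s d x))
     \<and> (\<forall>x\<in>S. s 1 x = x)"

definition k_algebra :: "('k::field \<Rightarrow> 'h::ring_1 \<Rightarrow> 'h) \<Rightarrow> bool" where
  "k_algebra sc \<longleftrightarrow> kvs UNIV (+) 0 sc
     \<and> (\<forall>c x y. sc c (x * y) = sc c x * y \<and> sc c (x * y) = x * sc c y)"

text \<open>Quasi-bialgebra (H, Delta, eps, Phi); Phinv represents the inverse of Phi.
 Delta h is a representative (formal sum of words of length 2) of the element Delta(h) of H\<otimes>H.\<close>
definition quasi_bialgebra ::
  "('k::field \<Rightarrow> 'h::ring_1 \<Rightarrow> 'h) \<Rightarrow> ('h \<Rightarrow> 'h list list) \<Rightarrow> ('h \<Rightarrow> 'k)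
    \<Rightarrow> 'h list list \<Rightarrow> 'h list list \<Rightarrow> bool" where
  "quasi_bialgebra sc Dl eps Phi Phinv \<longleftrightarrow>
     k_algebra sc
   \<and> (\<forall>h. \<forall>w\<in>set (Dl h). length w = 2)
   \<and> (\<forall>x y. kteq sc 2 (Dl (x + y)) (Dl x @ Dl y))
   \<and> (\<forall>c x. kteq sc 2 (Dl (sc c x)) (map (\<lambda>w. [sc c (w ! 0), w ! 1]) (Dl x)))
   \<and> (\<forall>x y. kteq sc 2 (Dl (x * y)) (tmul (Dl x) (Dl y)))
   \<and> kteq sc 2 (Dl 1) [[1, 1]]
   \<and> (\<forall>x y. eps (x + y) = eps x + eps y)
   \<and> (\<forall>c x. eps (sc c x) = c * eps x)
   \<and> (\<forall>x y. eps (x * y) = eps x * eps y)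
   \<and> eps 1 = 1
   \<and> (\<forall>w\<in>set Phi. length w = 3) \<and> (\<forall>w\<in>set Phinv. length w = 3)
   \<and> kteq sc 3 (tmul Phi Phinv) [[1, 1, 1]]
   \<and> kteq sc 3 (tmul Phinv Phi) [[1, 1, 1]]
   \<and> (\<forall>h. kteq sc 3 (tmul (tmul Phi (tapply 0 Dl (Dl h))) Phinv) (tapply 1 Dl (Dl h)))
   \<and> (\<forall>h. sum_list (map (\<lambda>w. sc (eps (w ! 1)) (w ! 0)) (Dl h)) = h)
   \<and> (\<forall>h. sum_list (map (\<lambda>w. sc (eps (w ! 0)) (w ! 1)) (Dl h)) = h)
   \<and> kteq sc 4 (tmul (tapply 2 Dl Phi) (tapply 0 Dl Phi))
               (tmul (tmul (map (\<lambda>w. 1 # w) Phi) (tapply 1 Dl Phi)) (map (\<lambda>w. w @ [1]) Phi))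
   \<and> kteq sc 2 (map (\<lambda>w. [sc (eps (w ! 1)) (w ! 0), w ! 2]) Phi) [[1, 1]]"

definition hmodule ::
  "('k::field \<Rightarrow> 'h::ring_1 \<Rightarrow> 'h) \<Rightarrow> 'x set \<Rightarrow> ('x \<Rightarrow> 'x \<Rightarrow> 'x) \<Rightarrow> 'x
    \<Rightarrow> ('k \<Rightarrow> 'x \<Rightarrow> 'x) \<Rightarrow> ('h \<Rightarrow> 'x \<Rightarrow> 'x) \<Rightarrow> bool" where
  "hmodule sc S p z s act \<longleftrightarrow> kvs S p z s
     \<and> (\<forall>h. \<forall>x\<in>S. act h x \<in> S)
     \<and> (\<forall>h g. \<forall>x\<in>S. act (h + g) x = p (act h x) (act g x))
     \<and> (\<forall>h. \<forall>x\<in>S. \<forall>y\<in>S. act h (p x y) = p (act h x) (act h y))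
     \<and> (\<forall>c h. \<forall>x\<in>S. act (sc c h) x = s c (act h x) \<and> act h (s c x) = s c (act h x))
     \<and> (\<forall>h g. \<forall>x\<in>S. act (h * g) x = act h (act g x))
     \<and> (\<forall>x\<in>S. act 1 x = x)"

definition module_algebra ::
  "('k::field \<Rightarrow> 'h::ring_1 \<Rightarrow> 'h) \<Rightarrow> ('h \<Rightarrow> 'h list list) \<Rightarrow> ('h \<Rightarrow> 'k) \<Rightarrow> 'h list list
    \<Rightarrow> ('k \<Rightarrow> 'a::ab_group_add \<Rightarrow> 'a) \<Rightarrow> ('h \<Rightarrow> 'a \<Rightarrow> 'a) \<Rightarrow> ('a \<Rightarrow> 'a \<Rightarrow> 'a) \<Rightarrow> 'a \<Rightarrow> bool" where
  "module_algebra sc Dl eps Phi sA act mA uA \<longleftrightarrow>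
     hmodule sc UNIV (+) 0 sA act
   \<and> (\<forall>a a' b. mA (a + a') b = mA a b + mA a' b)
   \<and> (\<forall>a b b'. mA a (b + b') = mA a b + mA a b')
   \<and> (\<forall>c a b. mA (sA c a) b = sA c (mA a b) \<and> mA a (sA c b) = sA c (mA a b))
   \<and> (\<forall>a. mA uA a = a \<and> mA a uA = a)
   \<and> (\<forall>a b d. mA (mA a b) d =
        sum_list (map (\<lambda>w. mA (act (w ! 0) a) (mA (act (w ! 1) b) (act (w ! 2) d))) Phi))
   \<and> (\<forall>h a b. act h (mA a b) = sum_list (map (\<lambda>w. mA (act (w ! 0) a) (act (w ! 1) b)) (Dl h)))
   \<and> (\<forall>h. act h uA = sA (eps h) uA)"

definition invariants :: "('k \<Rightarrow> 'x \<Rightarrow> 'x) \<Rightarrow> ('h \<Rightarrow> 'k) \<Rightarrow> ('h \<Rightarrow> 'x \<Rightarrow> 'x) \<Rightarrow> 'x set" where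
  "invariants s eps act = {x. \<forall>h. act h x = s (eps h) x}"

definition bmodule ::
  "'a::plus set \<Rightarrow> ('a \<Rightarrow> 'a \<Rightarrow> 'a) \<Rightarrow> 'a \<Rightarrow> 'x set \<Rightarrow> ('x \<Rightarrow> 'x \<Rightarrow> 'x) \<Rightarrow> 'x
    \<Rightarrow> ('a \<Rightarrow> 'x \<Rightarrow> 'x) \<Rightarrow> bool" where
  "bmodule B mA uA S p z act \<longleftrightarrow> abgrp S p z
     \<and> (\<forall>b\<in>B. \<forall>x\<in>S. act b x \<in> S)
     \<and> (\<forall>b\<in>B. \<forall>b'\<in>B. \<forall>x\<in>S. act (b + b') x = p (act b x) (act b' x))
     \<and> (\<forall>b\<in>B. \<forall>x\<in>S. \<forall>y\<in>S. act b (p x y) = p (act b x) (act b y))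
     \<and> (\<forall>b\<in>B. \<forall>b'\<in>B. \<forall>x\<in>S. act (mA b b') x = act b (act b' x))
     \<and> (\<forall>x\<in>S. act uA x = x)"

definition hopf_module ::
  "('k::field \<Rightarrow> 'h::ring_1 \<Rightarrow> 'h) \<Rightarrow> ('h \<Rightarrow> 'h list list) \<Rightarrow> 'h list list
    \<Rightarrow> ('k \<Rightarrow> 'a::ab_group_add \<Rightarrow> 'a) \<Rightarrow> ('h \<Rightarrow> 'a \<Rightarrow> 'a) \<Rightarrow> ('a \<Rightarrow> 'a \<Rightarrow> 'a) \<Rightarrow> 'a
    \<Rightarrow> 'x set \<Rightarrow> ('x \<Rightarrow> 'x \<Rightarrow> 'x) \<Rightarrow> 'x \<Rightarrow> ('k \<Rightarrow> 'x \<Rightarrow> 'x)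
    \<Rightarrow> ('h \<Rightarrow> 'x \<Rightarrow> 'x) \<Rightarrow> ('a \<Rightarrow> 'x \<Rightarrow> 'x) \<Rightarrow> bool" where
  "hopf_module sc Dl Phi sA act mA uA S p z s hN aN \<longleftrightarrow>
     hmodule sc S p z s hN
   \<and> (\<forall>a. \<forall>x\<in>S. aN a x \<in> S)
   \<and> (\<forall>a a'. \<forall>x\<in>S. aN (a + a') x = p (aN a x) (aN a' x))
   \<and> (\<forall>a. \<forall>x\<in>S. \<forall>y\<in>S. aN a (p x y) = p (aN a x) (aN a y))
   \<and> (\<forall>c a. \<forall>x\<in>S. aN (sA c a) x = s c (aN a x) \<and> aN a (s c x) = s c (aN a x))
   \<and> (\<forall>a b. \<forall>x\<in>S. aN (mA a b) x =
        gsum p z (map (\<lambda>w. aN (act (w ! 0) a) (aN (act (w ! 1) b) (hN (w ! 2) x))) Phi))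
   \<and> (\<forall>h a. \<forall>x\<in>S. hN h (aN a x) = gsum p z (map (\<lambda>w. aN (act (w ! 0) a) (hN (w ! 1) x)) (Dl h)))
   \<and> (\<forall>x\<in>S. aN uA x = x)"

definition btens_rel ::
  "'a::plus set \<Rightarrow> ('a \<Rightarrow> 'a \<Rightarrow> 'a) \<Rightarrow> ('a \<Rightarrow> 'm::plus \<Rightarrow> 'm) \<Rightarrow> ('a \<times> 'm \<Rightarrow> int) set" where
  "btens_rel B mA bM =
      {(\<lambda>y. delta (a + a', m) y - delta (a, m) y - delta (a', m) y) | a a' m. True}
    \<union> {(\<lambda>y. delta (a, m + m') y - delta (a, m) y - delta (a, m') y) | a m m'. True}
    \<union> {(\<lambda>y. delta (mA a b, m) y - delta (a, bM b m) y) | a b m. b \<in> B}"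

definition tcls :: "('x \<Rightarrow> int) set \<Rightarrow> 'x list \<Rightarrow> 'x list set" where
  "tcls G xs = {ys. teq G xs ys}"

definition tcarrier :: "('x \<Rightarrow> int) set \<Rightarrow> 'x list set set" where
  "tcarrier G = range (tcls G)"

definition trep :: "'x list set \<Rightarrow> 'x list" where
  "trep X = (SOME xs. xs \<in> X)"

definition tplus :: "('x \<Rightarrow> int) set \<Rightarrow> 'x list set \<Rightarrow> 'x list set \<Rightarrow> 'x list set" where
  "tplus G X Y = tcls G (trep X @ trep Y)"

definition tzero :: "('x \<Rightarrow> int) set \<Rightarrow> 'x list set" where
  "tzero G = tcls G []"

definition tscal :: "('a \<times> 'm \<Rightarrow> int) set \<Rightarrow> ('k \<Rightarrow> 'a \<Rightarrow> 'a) \<Rightarrow> 'k \<Rightarrow> ('a \<times> 'm) list set \<Rightarrow> ('a \<times> 'm) list set" where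
  "tscal G sA c X = tcls G (map (\<lambda>(a, m). (sA c a, m)) (trep X))"

definition thact :: "('a \<times> 'm \<Rightarrow> int) set \<Rightarrow> ('h \<Rightarrow> 'a \<Rightarrow> 'a) \<Rightarrow> 'h \<Rightarrow> ('a \<times> 'm) list set \<Rightarrow> ('a \<times> 'm) list set" where
  "thact G act h X = tcls G (map (\<lambda>(a, m). (act h a, m)) (trep X))"

definition taact :: "('a \<times> 'm \<Rightarrow> int) set \<Rightarrow> ('a \<Rightarrow> 'a \<Rightarrow> 'a) \<Rightarrow> 'a \<Rightarrow> ('a \<times> 'm) list set \<Rightarrow> ('a \<times> 'm) list set" where
  "taact G mA b X = tcls G (map (\<lambda>(a, m). (mA b a, m)) (trep X))"

definition tmap :: "('a \<times> 'm \<Rightarrow> int) set \<Rightarrow> ('a \<times> 'm2 \<Rightarrow> int) set \<Rightarrow> ('m2 \<Rightarrow> 'm)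
    \<Rightarrow> ('a \<times> 'm2) list set \<Rightarrow> ('a \<times> 'm) list set" where
  "tmap G G' u = restrict (\<lambda>X. tcls G (map (\<lambda>(a, m). (a, u m)) (trep X))) (tcarrier G')"

definition hopf_homs ::
  "'x set \<Rightarrow> ('x \<Rightarrow> 'x \<Rightarrow> 'x) \<Rightarrow> ('k \<Rightarrow> 'x \<Rightarrow> 'x) \<Rightarrow> ('h \<Rightarrow> 'x \<Rightarrow> 'x) \<Rightarrow> ('a \<Rightarrow> 'x \<Rightarrow> 'x)
   \<Rightarrow> 'y set \<Rightarrow> ('y \<Rightarrow> 'y \<Rightarrow> 'y) \<Rightarrow> ('k \<Rightarrow> 'y \<Rightarrow> 'y) \<Rightarrow> ('h \<Rightarrow> 'y \<Rightarrow> 'y) \<Rightarrow> ('a \<Rightarrow> 'y \<Rightarrow> 'y)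
   \<Rightarrow> ('x \<Rightarrow> 'y) set" where
  "hopf_homs S p s hS aS S' p' s' hS' aS' =
     {f. (\<forall>x\<in>S. f x \<in> S') \<and> (\<forall>x. x \<notin> S \<longrightarrow> f x = undefined)
       \<and> (\<forall>x\<in>S. \<forall>y\<in>S. f (p x y) = p' (f x) (f y))
       \<and> (\<forall>c. \<forall>x\<in>S. f (s c x) = s' c (f x))
       \<and> (\<forall>h. \<forall>x\<in>S. f (hS h x) = hS' h (f x))
       \<and> (\<forall>a. \<forall>x\<in>S. f (aS a x) = aS' a (f x))}"

definition bmod_homs ::
  "'a set \<Rightarrow> 'x set \<Rightarrow> ('x \<Rightarrow> 'x \<Rightarrow> 'x) \<Rightarrow> ('a \<Rightarrow> 'x \<Rightarrow> 'x)
   \<Rightarrow> 'y set \<Rightarrow> ('y \<Rightarrow> 'y \<Rightarrow> 'y) \<Rightarrow> ('a \<Rightarrow> 'y \<Rightarrow> 'y) \<Rightarrow> ('x \<Rightarrow> 'y) set" where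
  "bmod_homs B S p act S' p' act' =
     {f. (\<forall>x\<in>S. f x \<in> S') \<and> (\<forall>x. x \<notin> S \<longrightarrow> f x = undefined)
       \<and> (\<forall>x\<in>S. \<forall>y\<in>S. f (p x y) = p' (f x) (f y))
       \<and> (\<forall>b\<in>B. \<forall>x\<in>S. f (act b x) = act' b (f x))}"

definition adj_unit_map :: "('a \<times> 'm \<Rightarrow> int) set \<Rightarrow> 'a \<Rightarrow> (('a \<times> 'm) list set \<Rightarrow> 'n) \<Rightarrow> 'm \<Rightarrow> 'n" where
  "adj_unit_map G uA f = (\<lambda>m. f (tcls G [(uA, m)]))"

definition adj_inv_map :: "('a \<times> 'm \<Rightarrow> int) set \<Rightarrow> ('a \<Rightarrow> 'n \<Rightarrow> 'n) \<Rightarrow> ('m \<Rightarrow> 'n) \<Rightarrow> ('a \<times> 'm) list set \<Rightarrow> 'n::monoid_add" where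
  "adj_inv_map G aN g = restrict (\<lambda>X. sum_list (map (\<lambda>(a, m). aN a (g m)) (trep X))) (tcarrier G)"

end

theory Submission
  imports Defs "HOL-Library.Multiset"
begin

lemma fsum_append[simp]: "fsum (xs @ ys) y = fsum xs y + fsum ys y"
  by (simp add: fsum_def)
lemma fsum_Nil[simp]: "fsum [] y = 0" by (simp add: fsum_def)
lemma delta_fsum: "delta x = fsum [x]" by (auto simp: delta_def fsum_def)

lemma fsum_eq_mset: "(\<forall>y. fsum xs y = fsum ys y) \<longleftrightarrow> mset xs = mset ys"
  by (auto simp: fsum_def multiset_eq_iff count_mset)

lemma sg_eqI: "f \<in> subgrp_gen G \<Longrightarrow> (\<And>x. f x = g x) \<Longrightarrow> g \<in> subgrp_gen G"
proof -
  assume "f \<in> subgrp_gen G" "\<And>x. f x = g x"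
  then have "g = f" by auto
  then show ?thesis using \<open>f \<in> _\<close> by simp
qed

lemma sg_neg: "g \<in> subgrp_gen G \<Longrightarrow> (\<lambda>x. - g x) \<in> subgrp_gen G"
  by (rule sg_eqI[OF sg_diff[OF sg_zero]]) auto

lemma sg_add: "f \<in> subgrp_gen G \<Longrightarrow> g \<in> subgrp_gen G \<Longrightarrow> (\<lambda>x. f x + g x) \<in> subgrp_gen G"
  by (rule sg_eqI[OF sg_diff[OF _ sg_neg]]) auto

lemma teq_refl[simp,intro]: "teq G xs xs"
  unfolding teq_def by (rule sg_eqI[OF sg_zero]) auto

lemma teq_sym: "teq G xs ys \<Longrightarrow> teq G ys xs"
  unfolding teq_def by (rule sg_eqI[OF sg_neg]) auto

lemma teq_trans: "teq G xs ys \<Longrightarrow> teq G ys zs \<Longrightarrow> teq G xs zs"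
  unfolding teq_def by (drule (1) sg_add, erule sg_eqI) auto

lemma teq_append: "teq G xs ys \<Longrightarrow> teq G xs' ys' \<Longrightarrow> teq G (xs @ xs') (ys @ ys')"
  unfolding teq_def by (drule (1) sg_add, erule sg_eqI) auto

lemma teq_mset: "mset xs = mset ys \<Longrightarrow> teq G xs ys"
  unfolding teq_def by (rule sg_eqI[OF sg_zero]) (metis fsum_eq_mset diff_self)

lemma teq_gen: "(\<lambda>y. fsum xs y - fsum ys y) \<in> G \<Longrightarrow> teq G xs ys"
  unfolding teq_def by (rule sg_gen)

lemma teq_concat_map:
  "(\<And>x. x \<in> set xs \<Longrightarrow> teq G (F x) (F' x)) \<Longrightarrow> teq G (concat (map F xs)) (concat (map F' xs))"
  by (induction xs) (auto intro: teq_append)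

lemma mset_concat_map: "mset (concat (map F xs)) = (\<Sum>x\<in>#mset xs. mset (F x))"
  by (induction xs) auto

lemma sum_list_mset: "sum_list (map f xs) = (\<Sum>x\<in>#mset xs. f x)"
  by (induction xs) auto

lemma mset_concat_swap:
  "mset (concat (map (\<lambda>x. map (g x) Ys) Xs)) = mset (concat (map (\<lambda>y. map (\<lambda>x. g x y) Xs) Ys))"
proof (induction Xs)
  case Nil then show ?case by (induction Ys) auto
next
  case (Cons x Xs)
  have aux: "\<And>f h. mset (concat (map (\<lambda>y. f y # h y) Ys)) = mset (map f Ys) + mset (concat (map h Ys))"
    by (induction Ys) auto
  show ?case using Cons by (simp add: aux)
qed

lemma sg_rep:
  assumes "f \<in> subgrp_gen G"
    and gen: "\<And>g. g \<in> G \<Longrightarrow> \<exists>P N. g = (\<lambda>y. fsum P y - fsum N y) \<and> Q P N"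
    and q0: "Q [] []"
    and qd: "\<And>P1 N1 P2 N2. Q P1 N1 \<Longrightarrow> Q P2 N2 \<Longrightarrow> Q (P1 @ N2) (N1 @ P2)"
  shows "\<exists>P N. f = (\<lambda>y. fsum P y - fsum N y) \<and> Q P N"
  using assms(1)
proof (induction rule: subgrp_gen.induct)
  case sg_zero
  then show ?case using q0 by (intro exI[of _ "[]"]) auto
next
  case (sg_gen g)
  then show ?case using gen by blast
next
  case (sg_diff f g)
  then obtain P1 N1 P2 N2 where "f = (\<lambda>y. fsum P1 y - fsum N1 y)" "Q P1 N1"
    "g = (\<lambda>y. fsum P2 y - fsum N2 y)" "Q P2 N2" by blast
  then show ?case
    by (intro exI[of _ "P1 @ N2"] exI[of _ "N1 @ P2"]) (auto simp: qd)
qed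

lemma teq_map_gen:
  assumes gen: "\<And>g. g \<in> R \<Longrightarrow> \<exists>P N. g = (\<lambda>y. fsum P y - fsum N y) \<and> teq R' (concat (map F P)) (concat (map F N))"
    and "teq R xs ys"
  shows "teq R' (concat (map F xs)) (concat (map F ys))"
proof -
  let ?c = "\<lambda>xs. concat (map F xs)"
  obtain P N where PN: "(\<lambda>y. fsum xs y - fsum ys y) = (\<lambda>y. fsum P y - fsum N y)" "teq R' (?c P) (?c N)"
    using sg_rep[where Q = "\<lambda>P N. teq R' (?c P) (?c N)", OF assms(2)[unfolded teq_def] gen]
    by (auto intro: teq_append teq_sym)
  have "\<forall>y. fsum (xs @ N) y = fsum (ys @ P) y"
  proof
    fix y show "fsum (xs @ N) y = fsum (ys @ P) y" using fun_cong[OF PN(1), of y] by simp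
  qed
  then have "mset (xs @ N) = mset (ys @ P)" by (simp only: fsum_eq_mset)
  then have "mset (?c (xs @ N)) = mset (?c (ys @ P))" by (simp only: mset_concat_map)
  then have e: "\<forall>y. fsum (?c xs @ ?c N) y = fsum (?c ys @ ?c P) y"
    by (simp only: fsum_eq_mset) simp
  from PN(2) have "(\<lambda>y. fsum (?c P) y - fsum (?c N) y) \<in> subgrp_gen R'" by (simp add: teq_def)
  then show ?thesis unfolding teq_def
  proof (rule sg_eqI)
    fix x
    from e have "fsum (?c xs) x + fsum (?c N) x = fsum (?c ys) x + fsum (?c P) x" by simp
    then show "fsum (?c P) x - fsum (?c N) x = fsum (?c xs) x - fsum (?c ys) x" by linarith
  qed
qed

lemma teq_fun_gen:
  fixes \<phi> :: "'x \<Rightarrow> 'g::ab_group_add"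
  assumes gen: "\<And>g. g \<in> R \<Longrightarrow> \<exists>P N. g = (\<lambda>y. fsum P y - fsum N y) \<and> sum_list (map \<phi> P) = sum_list (map \<phi> N)"
    and "teq R xs ys"
  shows "sum_list (map \<phi> xs) = sum_list (map \<phi> ys)"
proof -
  obtain P N where PN: "(\<lambda>y. fsum xs y - fsum ys y) = (\<lambda>y. fsum P y - fsum N y)"
      "sum_list (map \<phi> P) = sum_list (map \<phi> N)"
    using sg_rep[where Q = "\<lambda>P N. sum_list (map \<phi> P) = sum_list (map \<phi> N)", OF assms(2)[unfolded teq_def] gen]
    by auto
  have "\<forall>y. fsum (xs @ N) y = fsum (ys @ P) y"
  proof
    fix y show "fsum (xs @ N) y = fsum (ys @ P) y" using fun_cong[OF PN(1), of y] by simp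
  qed
  then have "mset (xs @ N) = mset (ys @ P)" by (simp only: fsum_eq_mset)
  then have "sum_list (map \<phi> (xs @ N)) = sum_list (map \<phi> (ys @ P))" by (simp only: sum_list_mset)
  then show ?thesis using PN(2) by simp
qed

lemma teq_map_simple:
  assumes gen: "\<And>g. g \<in> R \<Longrightarrow> \<exists>P N. g = (\<lambda>y. fsum P y - fsum N y) \<and> teq R' (map f P) (map f N)"
    and "teq R xs ys"
  shows "teq R' (map f xs) (map f ys)"
  using teq_map_gen[where F = "\<lambda>x. [f x]", OF _ assms(2)] gen
  by (simp add: map_concat[symmetric])

lemma suml_cong: "(\<And>x. x \<in> set xs \<Longrightarrow> f x = g x) \<Longrightarrow> sum_list (map f xs) = sum_list (map g xs)"
  by (simp cong: map_cong)

lemma suml_concat: "sum_list (map f (concat xss)) = sum_list (map (\<lambda>xs. sum_list (map f xs)) xss)"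
  by (induction xss) auto

lemma suml_swap:
  fixes f :: "_ \<Rightarrow> _ \<Rightarrow> 'g::comm_monoid_add"
  shows "(\<Sum>x\<leftarrow>X. \<Sum>y\<leftarrow>Y. f x y) = (\<Sum>y\<leftarrow>Y. \<Sum>x\<leftarrow>X. f x y)"
  by (induction X) (auto simp: sum_list_addf)

lemma less2: "(i::nat) < 2 \<Longrightarrow> i = 0 \<or> i = 1" by auto
lemma less3: "(i::nat) < 3 \<Longrightarrow> i = 0 \<or> i = 1 \<or> i = 2" by auto
lemma less4: "(i::nat) < 4 \<Longrightarrow> i = 0 \<or> i = 1 \<or> i = 2 \<or> i = 3" by auto

lemma len2: "length w = 2 \<Longrightarrow> w = [w!0, w!1]"
proof (rule nth_equalityI)
  fix j assume "length w = 2" "j < length w"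
  then show "w ! j = [w!0, w!1] ! j" using less2[of j] by auto
qed simp
lemma len3: "length w = 3 \<Longrightarrow> w = [w!0, w!1, w!2]"
proof (rule nth_equalityI)
  fix j assume "length w = 3" "j < length w"
  then show "w ! j = [w!0, w!1, w!2] ! j" using less3[of j] by (auto simp: numeral_2_eq_2)
qed simp
lemma len4: "length w = 4 \<Longrightarrow> w = [w!0, w!1, w!2, w!3]"
proof (rule nth_equalityI)
  fix j assume "length w = 4" "j < length w"
  then show "w ! j = [w!0, w!1, w!2, w!3] ! j" using less4[of j] by (auto simp: numeral_2_eq_2 numeral_3_eq_3)
qed simp

lemma map2_upd_r: "map2 f x (w[i:=a]) = (map2 f x w)[i := f (x!i) a]"
proof (rule nth_equalityI)
  fix j assume "j < length (map2 f x (w[i := a]))"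
  then show "map2 f x (w[i := a]) ! j = (map2 f x w)[i := f (x ! i) a] ! j"
    by (cases "i = j") (auto simp: nth_list_update)
qed simp
lemma map2_upd_l: "map2 f (w[i:=a]) y = (map2 f w y)[i := f a (y!i)]"
proof (rule nth_equalityI)
  fix j assume "j < length (map2 f (w[i := a]) y)"
  then show "map2 f (w[i := a]) y ! j = (map2 f w y)[i := f a (y ! i)] ! j"
    by (cases "i = j") (auto simp: nth_list_update)
qed simp

lemma map2_assoc:
  fixes u v w :: "'h::semigroup_mult list"
  shows "map2 (*) (map2 (*) u v) w = map2 (*) u (map2 (*) v w)"
  by (rule nth_equalityI) (auto simp: mult.assoc)

definition mlin :: "('k \<Rightarrow> 'h::plus \<Rightarrow> 'h) \<Rightarrow> nat \<Rightarrow> ('h list \<Rightarrow> 'g::ab_group_add) \<Rightarrow> bool" where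
 "mlin sc n T \<longleftrightarrow> (\<forall>w i a b. length w = n \<longrightarrow> i < n \<longrightarrow> T (w[i:=a+b]) = T (w[i:=a]) + T (w[i:=b]))
   \<and> (\<forall>w i c. length w = n \<longrightarrow> i < n \<longrightarrow> T (w[i:=sc c (w!i)]) = T (w[0:=sc c (w!0)]))"

lemma mlin_teq:
  assumes "mlin sc n T" "kteq sc n xs ys"
  shows "sum_list (map T xs) = sum_list (map T ys)"
proof (rule teq_fun_gen[OF _ assms(2)[unfolded kteq_def]])
  fix g assume "g \<in> ktens_rel sc n"
  then show "\<exists>P N. g = (\<lambda>y. fsum P y - fsum N y) \<and> sum_list (map T P) = sum_list (map T N)"
    unfolding ktens_rel_def
  proof (elim UnE CollectE exE conjE)
    fix w i a b assume g: "g = (\<lambda>y. delta (w[i := a + b]) y - delta (w[i := a]) y - delta (w[i := b]) y)"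
      and l: "length w = n" "i < n"
    have e1: "g = (\<lambda>y. fsum [w[i := a + b]] y - fsum [w[i := a], w[i := b]] y)"
      unfolding g fsum_def delta_def by (rule ext) simp
    have e2: "T (w[i := a + b]) = T (w[i := a]) + T (w[i := b])"
      using assms(1) l unfolding mlin_def by blast
    show ?thesis using e1 e2 by (intro exI conjI) (assumption, simp)
  next
    fix w i j c assume g: "g = (\<lambda>y. delta (w[i := sc c (w ! i)]) y - delta (w[j := sc c (w ! j)]) y)"
      and l: "length w = n" "i < n" "j < n"
    have e1: "g = (\<lambda>y. fsum [w[i := sc c (w ! i)]] y - fsum [w[j := sc c (w ! j)]] y)"
      unfolding g fsum_def delta_def by (rule ext) simp
    have e2: "T (w[i := sc c (w ! i)]) = T (w[j := sc c (w ! j)])"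
      using assms(1) l unfolding mlin_def by metis
    show ?thesis using e1 e2 by (intro exI conjI) (assumption, simp)
  qed
qed

lemma mlin2I:
  assumes "\<And>a b y. T [a+b,y] = T [a,y] + T [b,y]" "\<And>x a b. T [x,a+b] = T [x,a] + T [x,b]"
    "\<And>c x y. T [x, sc c y] = T [sc c x, y]"
  shows "mlin sc 2 T"
  unfolding mlin_def
proof (intro conjI allI impI)
  fix w :: "'a list" and i :: nat and a b assume l: "length w = 2" "i < 2"
  obtain x y where w: "w = [x,y]" using len2[OF l(1)] by blast
  show "T (w[i := a + b]) = T (w[i := a]) + T (w[i := b])"
    using less2[OF l(2)] by (elim disjE) (simp_all add: w assms)
next
  fix w :: "'a list" and i :: nat and c assume l: "length w = 2" "i < 2"
  obtain x y where w: "w = [x,y]" using len2[OF l(1)] by blast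
  show "T (w[i := sc c (w ! i)]) = T (w[0 := sc c (w ! 0)])"
    using less2[OF l(2)] by (elim disjE) (simp_all add: w assms)
qed

lemma mlin3I:
  assumes "\<And>a b y z. T [a+b,y,z] = T [a,y,z] + T [b,y,z]" "\<And>x a b z. T [x,a+b,z] = T [x,a,z] + T [x,b,z]"
    "\<And>x y a b. T [x,y,a+b] = T [x,y,a] + T [x,y,b]"
    "\<And>c x y z. T [x, sc c y, z] = T [sc c x, y, z]" "\<And>c x y z. T [x, y, sc c z] = T [sc c x, y, z]"
  shows "mlin sc 3 T"
  unfolding mlin_def
proof (intro conjI allI impI)
  fix w :: "'a list" and i :: nat and a b assume l: "length w = 3" "i < 3"
  obtain x y z where w: "w = [x,y,z]" using len3[OF l(1)] by blast
  show "T (w[i := a + b]) = T (w[i := a]) + T (w[i := b])"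
    using less3[OF l(2)] by (elim disjE) (simp_all add: w assms numeral_2_eq_2)
next
  fix w :: "'a list" and i :: nat and c assume l: "length w = 3" "i < 3"
  obtain x y z where w: "w = [x,y,z]" using len3[OF l(1)] by blast
  show "T (w[i := sc c (w ! i)]) = T (w[0 := sc c (w ! 0)])"
    using less3[OF l(2)] by (elim disjE) (simp_all add: w assms numeral_2_eq_2)
qed

lemma mlin4I:
  assumes "\<And>a b y z u. T [a+b,y,z,u] = T [a,y,z,u] + T [b,y,z,u]"
    "\<And>x a b z u. T [x,a+b,z,u] = T [x,a,z,u] + T [x,b,z,u]"
    "\<And>x y a b u. T [x,y,a+b,u] = T [x,y,a,u] + T [x,y,b,u]"
    "\<And>x y z a b. T [x,y,z,a+b] = T [x,y,z,a] + T [x,y,z,b]"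
    "\<And>c x y z u. T [x, sc c y, z, u] = T [sc c x, y, z, u]"
    "\<And>c x y z u. T [x, y, sc c z, u] = T [sc c x, y, z, u]"
    "\<And>c x y z u. T [x, y, z, sc c u] = T [sc c x, y, z, u]"
  shows "mlin sc 4 T"
  unfolding mlin_def
proof (intro conjI allI impI)
  fix w :: "'a list" and i :: nat and a b assume l: "length w = 4" "i < 4"
  obtain x y z u where w: "w = [x,y,z,u]" using len4[OF l(1)] by blast
  show "T (w[i := a + b]) = T (w[i := a]) + T (w[i := b])"
    using less4[OF l(2)] by (elim disjE) (simp_all add: w assms numeral_2_eq_2 numeral_3_eq_3)
next
  fix w :: "'a list" and i :: nat and c assume l: "length w = 4" "i < 4"
  obtain x y z u where w: "w = [x,y,z,u]" using len4[OF l(1)] by blast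
  show "T (w[i := sc c (w ! i)]) = T (w[0 := sc c (w ! 0)])"
    using less4[OF l(2)] by (elim disjE) (simp_all add: w assms numeral_2_eq_2 numeral_3_eq_3)
qed

lemma mlin2D:
  assumes "mlin sc 2 T"
  shows "T [a+b,y] = T [a,y] + T [b,y]" "T [x,a+b] = T [x,a] + T [x,b]"
    "T [x, sc c y] = T [sc c x, y]"
proof -
  note m = assms[unfolded mlin_def]
  show "T [a+b,y] = T [a,y] + T [b,y]" using m[THEN conjunct1, rule_format, of "[a,y]" 0 a b] by simp
  show "T [x,a+b] = T [x,a] + T [x,b]" using m[THEN conjunct1, rule_format, of "[x,a]" 1 a b] by simp
  show "T [x, sc c y] = T [sc c x, y]" using m[THEN conjunct2, rule_format, of "[x,y]" 1 c] by simp
qed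

lemma mlin3D:
  assumes "mlin sc 3 T"
  shows "T [a+b,y,z] = T [a,y,z] + T [b,y,z]" "T [x,a+b,z] = T [x,a,z] + T [x,b,z]"
    "T [x,y,a+b] = T [x,y,a] + T [x,y,b]"
    "T [x, sc c y, z] = T [sc c x, y, z]" "T [x, y, sc c z] = T [sc c x, y, z]"
proof -
  note m = assms[unfolded mlin_def]
  show "T [a+b,y,z] = T [a,y,z] + T [b,y,z]" using m[THEN conjunct1, rule_format, of "[a,y,z]" 0 a b] by simp
  show "T [x,a+b,z] = T [x,a,z] + T [x,b,z]" using m[THEN conjunct1, rule_format, of "[x,a,z]" 1 a b] by simp
  show "T [x,y,a+b] = T [x,y,a] + T [x,y,b]" using m[THEN conjunct1, rule_format, of "[x,y,a]" 2 a b]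
    by (simp add: numeral_2_eq_2)
  show "T [x, sc c y, z] = T [sc c x, y, z]" using m[THEN conjunct2, rule_format, of "[x,y,z]" 1 c] by simp
  show "T [x, y, sc c z] = T [sc c x, y, z]" using m[THEN conjunct2, rule_format, of "[x,y,z]" 2 c]
    by (simp add: numeral_2_eq_2)
qed

lemma add_self_zero: "(x::'g::ab_group_add) = x + x \<Longrightarrow> x = 0" by simp

lemma mlin2_sum:
  fixes T :: "'h::comm_monoid_add list \<Rightarrow> 'g::ab_group_add"
  assumes "mlin sc 2 T"
  shows "T [sum_list (map f xs), y] = (\<Sum>x\<leftarrow>xs. T [f x, y])"
    "T [y, sum_list (map f xs)] = (\<Sum>x\<leftarrow>xs. T [y, f x])"
proof -
  have z1: "T [0, y] = 0" using mlin2D(1)[OF assms, of 0 0 y] by simp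
  have z2: "T [y, 0] = 0" using mlin2D(2)[OF assms, of y 0 0] by simp
  show "T [sum_list (map f xs), y] = (\<Sum>x\<leftarrow>xs. T [f x, y])"
    by (induction xs) (auto simp: z1 mlin2D(1)[OF assms])
  show "T [y, sum_list (map f xs)] = (\<Sum>x\<leftarrow>xs. T [y, f x])"
    by (induction xs) (auto simp: z2 mlin2D(2)[OF assms])
qed

lemma mlin3_sum:
  fixes T :: "'h::comm_monoid_add list \<Rightarrow> 'g::ab_group_add"
  assumes "mlin sc 3 T"
  shows "T [sum_list (map f xs), y, z] = (\<Sum>x\<leftarrow>xs. T [f x, y, z])"
    "T [y, sum_list (map f xs), z] = (\<Sum>x\<leftarrow>xs. T [y, f x, z])"
    "T [y, z, sum_list (map f xs)] = (\<Sum>x\<leftarrow>xs. T [y, z, f x])"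
proof -
  have z1: "T [0, y, z] = 0" using mlin3D(1)[OF assms, of 0 0 y z] by simp
  have z2: "T [y, 0, z] = 0" using mlin3D(2)[OF assms, of y 0 0 z] by simp
  have z3: "T [y, z, 0] = 0" using mlin3D(3)[OF assms, of y z 0 0] by simp
  show "T [sum_list (map f xs), y, z] = (\<Sum>x\<leftarrow>xs. T [f x, y, z])"
    by (induction xs) (auto simp: z1 mlin3D(1)[OF assms])
  show "T [y, sum_list (map f xs), z] = (\<Sum>x\<leftarrow>xs. T [y, f x, z])"
    by (induction xs) (auto simp: z2 mlin3D(2)[OF assms])
  show "T [y, z, sum_list (map f xs)] = (\<Sum>x\<leftarrow>xs. T [y, z, f x])"
    by (induction xs) (auto simp: z3 mlin3D(3)[OF assms])
qed

lemma mlin_suml: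
  assumes "\<And>x. x \<in> set X \<Longrightarrow> mlin sc n (F x)"
  shows "mlin sc n (\<lambda>u. \<Sum>x\<leftarrow>X. F x u)"
  using assms unfolding mlin_def
  by (auto simp: sum_list_addf[symmetric] intro!: suml_cong)

lemma suml_tmul: "sum_list (map T (tmul X Y)) = (\<Sum>x\<leftarrow>X. \<Sum>y\<leftarrow>Y. T (map2 (*) x y))"
  by (simp add: tmul_def suml_concat o_def)

lemma suml_tapply: "sum_list (map T (tapply i F X)) = (\<Sum>w\<leftarrow>X. \<Sum>v\<leftarrow>F (w!i). T (take i w @ v @ drop (Suc i) w))"
  by (simp add: tapply_def suml_concat o_def)

locale qb =
  fixes sc :: "'k::field \<Rightarrow> 'h::ring_1 \<Rightarrow> 'h" and Dl :: "'h \<Rightarrow> 'h list list" and eps :: "'h \<Rightarrow> 'k"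
    and Phi Phinv :: "'h list list"
  assumes QB: "quasi_bialgebra sc Dl eps Phi Phinv"
begin

lemma kalg: "k_algebra sc" using QB by (simp add: quasi_bialgebra_def)
lemma sc_add: "sc c (x + y) = sc c x + sc c y" using kalg unfolding k_algebra_def kvs_def by blast
lemma sc_addk: "sc (c + d) x = sc c x + sc d x" using kalg unfolding k_algebra_def kvs_def by blast
lemma sc_mult: "sc (c * d) x = sc c (sc d x)" using kalg unfolding k_algebra_def kvs_def by blast
lemma sc_one[simp]: "sc 1 x = x" using kalg unfolding k_algebra_def kvs_def by blast
lemma sc_ml: "sc c (x * y) = sc c x * y" using kalg unfolding k_algebra_def by blast
lemma sc_mr: "sc c (x * y) = x * sc c y" using kalg unfolding k_algebra_def by blast
lemma sc_comm: "sc c (sc d x) = sc d (sc c x)" by (metis sc_mult mult.commute)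

lemma Dl_len: "w \<in> set (Dl h) \<Longrightarrow> length w = 2" using QB unfolding quasi_bialgebra_def by blast
lemma Dl_add: "kteq sc 2 (Dl (x + y)) (Dl x @ Dl y)" using QB unfolding quasi_bialgebra_def by blast
lemma Dl_sc: "kteq sc 2 (Dl (sc c x)) (map (\<lambda>w. [sc c (w ! 0), w ! 1]) (Dl x))"
  using QB unfolding quasi_bialgebra_def by blast
lemma Dl_one: "kteq sc 2 (Dl 1) [[1, 1]]" using QB unfolding quasi_bialgebra_def by blast
lemma eps_add: "eps (x + y) = eps x + eps y" using QB unfolding quasi_bialgebra_def by blast
lemma eps_sc: "eps (sc c x) = c * eps x" using QB unfolding quasi_bialgebra_def by blast
lemma eps_mult: "eps (x * y) = eps x * eps y" using QB unfolding quasi_bialgebra_def by blast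
lemma eps_one[simp]: "eps 1 = 1" using QB unfolding quasi_bialgebra_def by blast
lemma Phi_len: "w \<in> set Phi \<Longrightarrow> length w = 3" using QB unfolding quasi_bialgebra_def by blast
lemma Phinv_len: "w \<in> set Phinv \<Longrightarrow> length w = 3" using QB unfolding quasi_bialgebra_def by blast
lemma PhinvPhi: "kteq sc 3 (tmul Phinv Phi) [[1, 1, 1]]" using QB unfolding quasi_bialgebra_def by blast
lemma cl: "sum_list (map (\<lambda>w. sc (eps (w ! 1)) (w ! 0)) (Dl h)) = h"
  using QB unfolding quasi_bialgebra_def by blast
lemma cr: "sum_list (map (\<lambda>w. sc (eps (w ! 0)) (w ! 1)) (Dl h)) = h"
  using QB unfolding quasi_bialgebra_def by blast
lemma pent: "kteq sc 4 (tmul (tapply 2 Dl Phi) (tapply 0 Dl Phi))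
               (tmul (tmul (map (\<lambda>w. 1 # w) Phi) (tapply 1 Dl Phi)) (map (\<lambda>w. w @ [1]) Phi))"
  using QB unfolding quasi_bialgebra_def by blast
lemma phi_cu: "kteq sc 2 (map (\<lambda>w. [sc (eps (w ! 1)) (w ! 0), w ! 2]) Phi) [[1, 1]]"
  using QB unfolding quasi_bialgebra_def by blast

lemma eps_zero[simp]: "eps 0 = 0" using eps_add[of 0 0] by (metis add.right_neutral add_left_cancel)
lemma eps_sum: "eps (sum_list (map f xs)) = (\<Sum>x\<leftarrow>xs. eps (f x))"
  by (induction xs) (auto simp: eps_add)
lemma sc_zero[simp]: "sc c 0 = 0" using sc_add[of c 0 0] by simp
lemma sc_zerok[simp]: "sc 0 x = 0" using sc_addk[of 0 0 x] by simp

lemma eps_Dl: "eps h = (\<Sum>w\<leftarrow>Dl h. eps (w!0) * eps (w!1))"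
proof -
  have "eps h = eps (sum_list (map (\<lambda>w. sc (eps (w ! 1)) (w ! 0)) (Dl h)))" using cl[of h] by simp
  also have "\<dots> = (\<Sum>w\<leftarrow>Dl h. eps (w!0) * eps (w!1))" by (simp add: eps_sum eps_sc mult.commute)
  finally show ?thesis .
qed

lemma F_Dl_add: "mlin sc 2 T \<Longrightarrow> sum_list (map T (Dl (x+y))) = sum_list (map T (Dl x)) + sum_list (map T (Dl y))"
  using mlin_teq[OF _ Dl_add] by simp
lemma F_Dl_sc: "mlin sc 2 T \<Longrightarrow> sum_list (map T (Dl (sc c x))) = (\<Sum>v\<leftarrow>Dl x. T [sc c (v!0), v!1])"
  using mlin_teq[OF _ Dl_sc] by (simp add: o_def)
lemma F_Dl_one: "mlin sc 2 T \<Longrightarrow> sum_list (map T (Dl 1)) = T [1,1]"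
  using mlin_teq[OF _ Dl_one] by simp
lemma F_phi_cu: "mlin sc 2 T \<Longrightarrow> (\<Sum>w\<leftarrow>Phi. T [sc (eps (w!1)) (w!0), w!2]) = T [1,1]"
  using mlin_teq[OF _ phi_cu] by (simp add: o_def)
lemma F_PhinvPhi: "mlin sc 3 T \<Longrightarrow> (\<Sum>x\<leftarrow>Phinv. \<Sum>w\<leftarrow>Phi. T (map2 (*) x w)) = T [1,1,1]"
  using mlin_teq[OF _ PhinvPhi] by (simp add: suml_tmul)

lemma mlin_lmul:
  assumes T: "mlin sc n T" and lx: "length x = n"
  shows "mlin sc n (\<lambda>u. T (map2 (*) x u))"
  unfolding mlin_def
proof (intro conjI allI impI)
  fix w :: "'h list" and i :: nat and a b assume l: "length w = n" "i < n"
  let ?m = "map2 (*) x w"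
  have lm: "length ?m = n" using l lx by simp
  have "T (?m[i := x!i * a + x!i * b]) = T (?m[i := x!i * a]) + T (?m[i := x!i * b])"
    using T lm l unfolding mlin_def by blast
  then show "T (map2 (*) x (w[i := a + b])) = T (map2 (*) x (w[i := a])) + T (map2 (*) x (w[i := b]))"
    by (simp add: map2_upd_r distrib_left)
next
  fix w :: "'h list" and i :: nat and c assume l: "length w = n" "i < n"
  let ?m = "map2 (*) x w"
  have lm: "length ?m = n" using l lx by simp
  have e: "\<And>j. j < n \<Longrightarrow> map2 (*) x (w[j := sc c (w ! j)]) = ?m[j := sc c (?m ! j)]"
    using l lx by (simp add: map2_upd_r sc_mr)
  have "T (?m[i := sc c (?m ! i)]) = T (?m[0 := sc c (?m ! 0)])"
    using T lm l unfolding mlin_def by blast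
  then show "T (map2 (*) x (w[i := sc c (w ! i)])) = T (map2 (*) x (w[0 := sc c (w ! 0)]))"
    using e[of i] e[of 0] l by simp
qed

lemma mlin_rmul:
  assumes T: "mlin sc n T" and lx: "length x = n"
  shows "mlin sc n (\<lambda>u. T (map2 (*) u x))"
  unfolding mlin_def
proof (intro conjI allI impI)
  fix w :: "'h list" and i :: nat and a b assume l: "length w = n" "i < n"
  let ?m = "map2 (*) w x"
  have lm: "length ?m = n" using l lx by simp
  have "T (?m[i := a * x!i + b * x!i]) = T (?m[i := a * x!i]) + T (?m[i := b * x!i])"
    using T lm l unfolding mlin_def by blast
  then show "T (map2 (*) (w[i := a + b]) x) = T (map2 (*) (w[i := a]) x) + T (map2 (*) (w[i := b]) x)"
    by (simp add: map2_upd_l distrib_right)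
next
  fix w :: "'h list" and i :: nat and c assume l: "length w = n" "i < n"
  let ?m = "map2 (*) w x"
  have lm: "length ?m = n" using l lx by simp
  have e: "\<And>j. j < n \<Longrightarrow> map2 (*) (w[j := sc c (w ! j)]) x = ?m[j := sc c (?m ! j)]"
    using l lx by (simp add: map2_upd_l sc_ml)
  have "T (?m[i := sc c (?m ! i)]) = T (?m[0 := sc c (?m ! 0)])"
    using T lm l unfolding mlin_def by blast
  then show "T (map2 (*) (w[i := sc c (w ! i)]) x) = T (map2 (*) (w[0 := sc c (w ! 0)]) x)"
    using e[of i] e[of 0] l by simp
qed

definition ee :: "'h list \<Rightarrow> 'h list" where
  "ee u = [u!0, u!1, sc (eps (u!2)) (u!3)]"

lemma mlin_ee:
  assumes T: "mlin sc 3 T" shows "mlin sc 4 (\<lambda>u. T (ee u))"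
proof (rule mlin4I)
  note D = mlin3D[OF T]
  fix a b y z u x c
  show "T (ee [a + b, y, z, u]) = T (ee [a, y, z, u]) + T (ee [b, y, z, u])" by (simp add: ee_def D(1))
  show "T (ee [x, a + b, z, u]) = T (ee [x, a, z, u]) + T (ee [x, b, z, u])" by (simp add: ee_def D(2))
  show "T (ee [x, y, a + b, u]) = T (ee [x, y, a, u]) + T (ee [x, y, b, u])"
    by (simp add: ee_def D(3) eps_add sc_addk)
  show "T (ee [x, y, z, a + b]) = T (ee [x, y, z, a]) + T (ee [x, y, z, b])" by (simp add: ee_def D(3) sc_add)
  show "T (ee [x, sc c y, z, u]) = T (ee [sc c x, y, z, u])" by (simp add: ee_def D(4))
  show "T (ee [x, y, sc c z, u]) = T (ee [sc c x, y, z, u])" by (simp add: ee_def D(5)[symmetric] eps_sc sc_mult)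
  show "T (ee [x, y, z, sc c u]) = T (ee [sc c x, y, z, u])"
    by (simp add: ee_def D(5)[symmetric] sc_comm)
qed

lemma ee_mul:
  assumes "length u = 4" "length v = 4"
  shows "ee (map2 (*) u v) = map2 (*) (ee u) (ee v)"
proof -
  obtain u0 u1 u2 u3 where u: "u = [u0,u1,u2,u3]" using len4[OF assms(1)] by blast
  obtain v0 v1 v2 v3 where v: "v = [v0,v1,v2,v3]" using len4[OF assms(2)] by blast
  have "sc (eps u2) u3 * sc (eps v2) v3 = sc (eps u2 * eps v2) (u3 * v3)"
    by (simp add: sc_ml[symmetric] sc_mr[symmetric] sc_mult sc_comm)
  then show ?thesis by (simp add: u v ee_def eps_mult)
qed

lemma one3: "length (x::'h list) = 3 \<Longrightarrow> map2 (*) [1,1,1] x = x"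
  by (subst (1 2) len3[of x]) auto
lemma one3r: "length (x::'h list) = 3 \<Longrightarrow> map2 (*) x [1,1,1] = x"
  by (subst (1 2) len3[of x]) auto

lemma tap_len: "x \<in> set (tapply i Dl Phi) \<Longrightarrow> i < 3 \<Longrightarrow> length x = 4"
  by (auto simp: tapply_def Phi_len Dl_len)

end

context qb
begin

lemma tw0: "length w = 3 \<Longrightarrow> length v = 2 \<Longrightarrow> take 0 w @ v @ drop (Suc 0) w = [v!0, v!1, w!1, w!2]"
  by (subst (1 2) len3[of w], simp, subst len2[of v], auto)
lemma tw1: "length w = 3 \<Longrightarrow> length v = 2 \<Longrightarrow> take 1 w @ v @ drop (Suc 1) w = [w!0, v!0, v!1, w!2]"
  by (subst (1 2) len3[of w], simp, subst len2[of v], auto)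
lemma tw2: "length w = 3 \<Longrightarrow> length v = 2 \<Longrightarrow> take 2 w @ v @ drop (Suc 2) w = [w!0, w!1, v!0, v!1]"
  by (subst (1 2) len3[of w], simp, subst len2[of v], auto simp: numeral_2_eq_2)

lemma A2:
  assumes T: "mlin sc 3 T"
  shows "(\<Sum>a\<leftarrow>tapply 2 Dl Phi. T (ee a)) = (\<Sum>w\<leftarrow>Phi. T w)"
  unfolding suml_tapply
proof (rule suml_cong)
  fix w assume w: "w \<in> set Phi"
  have "(\<Sum>v\<leftarrow>Dl (w ! 2). T (ee (take 2 w @ v @ drop (Suc 2) w)))
      = (\<Sum>v\<leftarrow>Dl (w ! 2). T [w!0, w!1, sc (eps (v!0)) (v!1)])"
  proof (rule suml_cong)
    fix v assume v: "v \<in> set (Dl (w ! 2))"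
    show "T (ee (take 2 w @ v @ drop (Suc 2) w)) = T [w!0, w!1, sc (eps (v!0)) (v!1)]"
      by (subst tw2[OF Phi_len[OF w] Dl_len[OF v]]) (simp add: ee_def)
  qed
  also have "\<dots> = T [w!0, w!1, sum_list (map (\<lambda>v. sc (eps (v ! 0)) (v ! 1)) (Dl (w!2)))]"
    by (simp add: mlin3_sum[OF T])
  also have "\<dots> = T w" by (simp only: cr, subst (2) len3[OF Phi_len[OF w]], rule refl)
  finally show "(\<Sum>v\<leftarrow>Dl (w ! 2). T (ee (take 2 w @ v @ drop (Suc 2) w))) = T w" .
qed

lemma A1:
  assumes T: "mlin sc 3 T"
  shows "(\<Sum>a\<leftarrow>tapply 1 Dl Phi. T (ee a)) = (\<Sum>w\<leftarrow>Phi. T w)"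
  unfolding suml_tapply
proof (rule suml_cong)
  fix w assume w: "w \<in> set Phi"
  note D = mlin3D[OF T]
  have "(\<Sum>v\<leftarrow>Dl (w ! 1). T (ee (take 1 w @ v @ drop (Suc 1) w)))
      = (\<Sum>v\<leftarrow>Dl (w ! 1). T [w!0, sc (eps (v!1)) (v!0), w!2])"
  proof (rule suml_cong)
    fix v assume v: "v \<in> set (Dl (w ! 1))"
    show "T (ee (take 1 w @ v @ drop (Suc 1) w)) = T [w!0, sc (eps (v!1)) (v!0), w!2]"
      by (subst tw1[OF Phi_len[OF w] Dl_len[OF v]]) (simp add: ee_def D(4,5) numeral_2_eq_2 numeral_3_eq_3)
  qed
  also have "\<dots> = T [w!0, sum_list (map (\<lambda>v. sc (eps (v ! 1)) (v ! 0)) (Dl (w!1))), w!2]"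
    by (simp add: mlin3_sum[OF T])
  also have "\<dots> = T w" by (simp only: cl, subst (2) len3[OF Phi_len[OF w]], rule refl)
  finally show "(\<Sum>v\<leftarrow>Dl (w ! 1). T (ee (take 1 w @ v @ drop (Suc 1) w))) = T w" .
qed

lemma mlin_slot01:
  assumes T: "mlin sc 3 T" shows "mlin sc 2 (\<lambda>v. T [v!0, v!1, z])"
  using mlin3D[OF T] by (intro mlin2I) auto

lemma mlin_slot12:
  assumes T: "mlin sc 3 T" shows "mlin sc 2 (\<lambda>v. T [z, v!0, v!1])"
  using mlin3D[OF T] by (intro mlin2I) auto

lemma A0:
  assumes T: "mlin sc 3 T"
  shows "(\<Sum>b\<leftarrow>tapply 0 Dl Phi. T (ee b)) = T [1,1,1]"
proof -
  note D = mlin3D[OF T]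
  define S where "S u = (\<Sum>v\<leftarrow>Dl (u!0). T [v!0, v!1, u!1])" for u
  have S: "mlin sc 2 S"
  proof (rule mlin2I)
    fix a b y
    show "S [a + b, y] = S [a, y] + S [b, y]"
      unfolding S_def using F_Dl_add[OF mlin_slot01[OF T, of y]] by simp
  next
    fix x a b
    show "S [x, a + b] = S [x, a] + S [x, b]"
      unfolding S_def by (simp add: D(3) sum_list_addf)
  next
    fix c x y
    show "S [x, sc c y] = S [sc c x, y]"
      unfolding S_def using F_Dl_sc[OF mlin_slot01[OF T, of y]] by (simp add: D(5))
  qed
  have "(\<Sum>b\<leftarrow>tapply 0 Dl Phi. T (ee b)) = (\<Sum>w\<leftarrow>Phi. S [w!0, sc (eps (w!1)) (w!2)])"
    unfolding suml_tapply
  proof (rule suml_cong)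
    fix w assume w: "w \<in> set Phi"
    show "(\<Sum>v\<leftarrow>Dl (w ! 0). T (ee (take 0 w @ v @ drop (Suc 0) w))) = S [w ! 0, sc (eps (w ! 1)) (w ! 2)]"
      unfolding S_def nth_Cons_0
    proof (rule suml_cong)
      fix v assume v: "v \<in> set (Dl (w ! 0))"
      show "T (ee (take 0 w @ v @ drop (Suc 0) w)) = T [v ! 0, v ! 1, [w ! 0, sc (eps (w ! 1)) (w ! 2)] ! 1]"
        by (subst tw0[OF Phi_len[OF w] Dl_len[OF v]]) (simp add: ee_def numeral_2_eq_2 numeral_3_eq_3)
    qed
  qed
  also have "\<dots> = (\<Sum>w\<leftarrow>Phi. S [sc (eps (w!1)) (w!0), w!2])"
    by (simp add: mlin2D(3)[OF S])
  also have "\<dots> = S [1,1]" by (rule F_phi_cu[OF S])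
  also have "\<dots> = T [1,1,1]" unfolding S_def using F_Dl_one[OF mlin_slot01[OF T, of 1]] by simp
  finally show ?thesis .
qed

lemma Aone:
  assumes T: "mlin sc 3 T"
  shows "(\<Sum>a\<leftarrow>map (\<lambda>w. 1 # w) Phi. T (ee a)) = T [1,1,1]"
proof -
  note D = mlin3D[OF T]
  have "(\<Sum>a\<leftarrow>map (\<lambda>w. 1 # w) Phi. T (ee a)) = (\<Sum>w\<leftarrow>Phi. T [1, sc (eps (w!1)) (w!0), w!2])"
    by (simp add: o_def ee_def numeral_2_eq_2 numeral_3_eq_3 D(4,5))
  also have "\<dots> = T [1,1,1]" using F_phi_cu[OF mlin_slot12[OF T, of 1]] by simp
  finally show ?thesis .
qed


lemma len_ee[simp]: "length (ee a) = 3" by (simp add: ee_def)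

lemma ee_one3r: "map2 (*) (ee a) [1,1,1] = ee a" by (simp add: ee_def)

lemma PENT:
  assumes T: "mlin sc 3 T"
  shows "(\<Sum>w\<leftarrow>Phi. T w) = (\<Sum>w\<leftarrow>Phi. \<Sum>r\<leftarrow>Phi. T (map2 (*) w (ee (r @ [1]))))"
proof -
  let ?P1 = "map (\<lambda>w. 1 # w) Phi" and ?Q = "tapply 1 Dl Phi" and ?R = "map (\<lambda>w. w @ [1]) Phi"
  have T4: "mlin sc 4 (\<lambda>u. T (ee u))" by (rule mlin_ee[OF T])
  have eq: "(\<Sum>u\<leftarrow>tmul (tapply 2 Dl Phi) (tapply 0 Dl Phi). T (ee u)) = (\<Sum>u\<leftarrow>tmul (tmul ?P1 ?Q) ?R. T (ee u))"
    using mlin_teq[OF T4 pent] .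
  have "(\<Sum>u\<leftarrow>tmul (tapply 2 Dl Phi) (tapply 0 Dl Phi). T (ee u))
      = (\<Sum>a\<leftarrow>tapply 2 Dl Phi. \<Sum>b\<leftarrow>tapply 0 Dl Phi. T (map2 (*) (ee a) (ee b)))"
    unfolding suml_tmul
  proof (rule suml_cong, rule suml_cong)
    fix a b assume a: "a \<in> set (tapply 2 Dl Phi)" and b: "b \<in> set (tapply 0 Dl Phi)"
    have "length a = 4" "length b = 4" using tap_len[OF a] tap_len[OF b] by auto
    then show "T (ee (map2 (*) a b)) = T (map2 (*) (ee a) (ee b))" by (simp add: ee_mul)
  qed
  also have "\<dots> = (\<Sum>a\<leftarrow>tapply 2 Dl Phi. T (ee a))"
  proof (rule suml_cong)
    fix a
    show "(\<Sum>b\<leftarrow>tapply 0 Dl Phi. T (map2 (*) (ee a) (ee b))) = T (ee a)"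
      using A0[OF mlin_lmul[OF T len_ee[of a]]] by (simp add: ee_one3r)
  qed
  also have "\<dots> = (\<Sum>w\<leftarrow>Phi. T w)" by (rule A2[OF T])
  finally have L: "(\<Sum>u\<leftarrow>tmul (tapply 2 Dl Phi) (tapply 0 Dl Phi). T (ee u)) = (\<Sum>w\<leftarrow>Phi. T w)" .
  have "(\<Sum>u\<leftarrow>tmul (tmul ?P1 ?Q) ?R. T (ee u))
      = (\<Sum>p\<leftarrow>?P1. \<Sum>q\<leftarrow>?Q. \<Sum>r\<leftarrow>?R. T (map2 (*) (ee p) (map2 (*) (ee q) (ee r))))"
    unfolding suml_tmul
  proof (rule suml_cong, rule suml_cong, rule suml_cong)
    fix p q r assume p: "p \<in> set ?P1" and q: "q \<in> set ?Q" and r: "r \<in> set ?R"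
    have l: "length p = 4" "length q = 4" "length r = 4" "length (map2 (*) p q) = 4"
      using p r tap_len[OF q] by (auto simp: Phi_len)
    show "T (ee (map2 (*) (map2 (*) p q) r)) = T (map2 (*) (ee p) (map2 (*) (ee q) (ee r)))"
      using l by (simp add: ee_mul map2_assoc)
  qed
  also have "\<dots> = (\<Sum>q\<leftarrow>?Q. \<Sum>r\<leftarrow>?R. T (map2 (*) (ee q) (ee r)))"
  proof -
    have F: "mlin sc 3 (\<lambda>y. \<Sum>q\<leftarrow>?Q. \<Sum>r\<leftarrow>?R. T (map2 (*) y (map2 (*) (ee q) (ee r))))"
      by (intro mlin_suml mlin_rmul[OF T]) simp
    have "(\<Sum>p\<leftarrow>?P1. \<Sum>q\<leftarrow>?Q. \<Sum>r\<leftarrow>?R. T (map2 (*) (ee p) (map2 (*) (ee q) (ee r))))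
       = (\<Sum>q\<leftarrow>?Q. \<Sum>r\<leftarrow>?R. T (map2 (*) [1,1,1] (map2 (*) (ee q) (ee r))))"
      using Aone[OF F] .
    also have "\<dots> = (\<Sum>q\<leftarrow>?Q. \<Sum>r\<leftarrow>?R. T (map2 (*) (ee q) (ee r)))"
      by (intro suml_cong) (simp add: one3)
    finally show ?thesis .
  qed
  also have "\<dots> = (\<Sum>w\<leftarrow>Phi. \<Sum>r\<leftarrow>?R. T (map2 (*) w (ee r)))"
  proof -
    have G: "mlin sc 3 (\<lambda>y. \<Sum>r\<leftarrow>?R. T (map2 (*) y (ee r)))"
      by (intro mlin_suml mlin_rmul[OF T]) simp
    show ?thesis using A1[OF G] .
  qed
  also have "\<dots> = (\<Sum>w\<leftarrow>Phi. \<Sum>r\<leftarrow>Phi. T (map2 (*) w (ee (r @ [1]))))"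
    by (simp add: o_def)
  finally show ?thesis using L eq by simp
qed

lemma CANCEL:
  assumes T: "mlin sc 3 T"
  shows "(\<Sum>r\<leftarrow>Phi. T (ee (r @ [1]))) = T [1,1,1]"
proof -
  let ?p = "\<lambda>r. ee (r @ [1])"
  have T': "mlin sc 3 (\<lambda>u. \<Sum>x\<leftarrow>Phinv. T (map2 (*) x u))"
    by (intro mlin_suml mlin_lmul[OF T]) (simp add: Phinv_len)
  have e: "(\<Sum>w\<leftarrow>Phi. \<Sum>x\<leftarrow>Phinv. T (map2 (*) x w))
     = (\<Sum>w\<leftarrow>Phi. \<Sum>r\<leftarrow>Phi. \<Sum>x\<leftarrow>Phinv. T (map2 (*) x (map2 (*) w (?p r))))"
    using PENT[OF T'] .
  have "(\<Sum>w\<leftarrow>Phi. \<Sum>x\<leftarrow>Phinv. T (map2 (*) x w)) = (\<Sum>x\<leftarrow>Phinv. \<Sum>w\<leftarrow>Phi. T (map2 (*) x w))"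
    by (rule suml_swap)
  also have "\<dots> = T [1,1,1]" by (rule F_PhinvPhi[OF T])
  finally have L: "(\<Sum>w\<leftarrow>Phi. \<Sum>x\<leftarrow>Phinv. T (map2 (*) x w)) = T [1,1,1]" .
  have "(\<Sum>w\<leftarrow>Phi. \<Sum>r\<leftarrow>Phi. \<Sum>x\<leftarrow>Phinv. T (map2 (*) x (map2 (*) w (?p r))))
      = (\<Sum>w\<leftarrow>Phi. \<Sum>x\<leftarrow>Phinv. \<Sum>r\<leftarrow>Phi. T (map2 (*) (map2 (*) x w) (?p r)))"
    by (intro suml_cong) (simp add: suml_swap[of _ Phi] map2_assoc)
  also have "\<dots> = (\<Sum>x\<leftarrow>Phinv. \<Sum>w\<leftarrow>Phi. \<Sum>r\<leftarrow>Phi. T (map2 (*) (map2 (*) x w) (?p r)))"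
    by (rule suml_swap)
  also have "\<dots> = (\<Sum>r\<leftarrow>Phi. T (map2 (*) [1,1,1] (?p r)))"
  proof -
    have H: "mlin sc 3 (\<lambda>q. \<Sum>r\<leftarrow>Phi. T (map2 (*) q (?p r)))"
      by (intro mlin_suml mlin_rmul[OF T]) simp
    show ?thesis using F_PhinvPhi[OF H] .
  qed
  also have "\<dots> = (\<Sum>r\<leftarrow>Phi. T (?p r))" by (simp add: one3)
  finally show ?thesis using L e by simp
qed

lemma PHI_R:
  assumes T: "mlin sc 2 T"
  shows "(\<Sum>w\<leftarrow>Phi. T [sc (eps (w!2)) (w!0), w!1]) = T [1,1]"
proof -
  note D = mlin2D[OF T]
  define T3 where "T3 u = T [sc (eps (u!2)) (u!0), u!1]" for u
  have M: "mlin sc 3 T3"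
  proof (rule mlin3I)
    fix a b y z x c
    show "T3 [a + b, y, z] = T3 [a, y, z] + T3 [b, y, z]" by (simp add: T3_def sc_add D(1))
    show "T3 [x, a + b, z] = T3 [x, a, z] + T3 [x, b, z]" by (simp add: T3_def D(2))
    show "T3 [x, y, a + b] = T3 [x, y, a] + T3 [x, y, b]" by (simp add: T3_def eps_add sc_addk D(1))
    show "T3 [x, sc c y, z] = T3 [sc c x, y, z]" by (simp add: T3_def D(3) sc_comm)
    show "T3 [x, y, sc c z] = T3 [sc c x, y, z]" by (simp add: T3_def eps_sc sc_mult sc_comm)
  qed
  have "(\<Sum>r\<leftarrow>Phi. T3 (ee (r @ [1]))) = T3 [1,1,1]" by (rule CANCEL[OF M])
  moreover have "(\<Sum>r\<leftarrow>Phi. T3 (ee (r @ [1]))) = (\<Sum>w\<leftarrow>Phi. T [sc (eps (w!2)) (w!0), w!1])"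
  proof (rule suml_cong)
    fix w assume w: "w \<in> set Phi"
    obtain a b c where w3: "w = [a,b,c]" using len3[OF Phi_len[OF w]] by blast
    show "T3 (ee (w @ [1])) = T [sc (eps (w!2)) (w!0), w!1]"
      by (simp add: w3 T3_def ee_def eps_sc)
  qed
  ultimately show ?thesis by (simp add: T3_def)
qed

end

lemma gsum_sum: "gsum (+) 0 xs = sum_list xs"
  by (simp add: gsum_def sum_list.eq_foldr)

locale ma = qb sc Dl eps Phi Phinv
  for sc :: "'k::field \<Rightarrow> 'h::ring_1 \<Rightarrow> 'h" and Dl eps Phi Phinv +
  fixes sA :: "'k \<Rightarrow> 'a::ab_group_add \<Rightarrow> 'a" and act :: "'h \<Rightarrow> 'a \<Rightarrow> 'a"
    and mA :: "'a \<Rightarrow> 'a \<Rightarrow> 'a" and uA :: 'a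
  assumes MA: "module_algebra sc Dl eps Phi sA act mA uA"
begin

definition "BB = invariants sA eps act"

lemma hmA: "hmodule sc UNIV (+) 0 sA act" using MA by (simp add: module_algebra_def)
lemma sA_add: "sA c (x + y) = sA c x + sA c y" using hmA unfolding hmodule_def kvs_def by auto
lemma sA_addk: "sA (c + d) x = sA c x + sA d x" using hmA unfolding hmodule_def kvs_def by auto
lemma sA_mult: "sA (c * d) x = sA c (sA d x)" using hmA unfolding hmodule_def kvs_def by auto
lemma sA_one[simp]: "sA 1 x = x" using hmA unfolding hmodule_def kvs_def by auto
lemma act_addh: "act (h + g) x = act h x + act g x" using hmA unfolding hmodule_def by auto
lemma act_add: "act h (x + y) = act h x + act h y" using hmA unfolding hmodule_def by auto
lemma act_sc: "act (sc c h) x = sA c (act h x)" using hmA unfolding hmodule_def by auto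
lemma act_sA: "act h (sA c x) = sA c (act h x)" using hmA unfolding hmodule_def by auto
lemma act_mult: "act (h * g) x = act h (act g x)" using hmA unfolding hmodule_def by auto
lemma act_one[simp]: "act 1 x = x" using hmA unfolding hmodule_def by auto
lemma mA_addl: "mA (a + a') b = mA a b + mA a' b" using MA unfolding module_algebra_def by auto
lemma mA_addr: "mA a (b + b') = mA a b + mA a b'" using MA unfolding module_algebra_def by auto
lemma mA_scl: "mA (sA c a) b = sA c (mA a b)" using MA unfolding module_algebra_def by auto
lemma mA_scr: "mA a (sA c b) = sA c (mA a b)" using MA unfolding module_algebra_def by auto
lemma mA_unitl[simp]: "mA uA a = a" using MA unfolding module_algebra_def by auto
lemma mA_unitr[simp]: "mA a uA = a" using MA unfolding module_algebra_def by auto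
lemma mA_assoc: "mA (mA a b) d =
        sum_list (map (\<lambda>w. mA (act (w ! 0) a) (mA (act (w ! 1) b) (act (w ! 2) d))) Phi)"
  using MA unfolding module_algebra_def by auto
lemma act_mA: "act h (mA a b) = sum_list (map (\<lambda>w. mA (act (w ! 0) a) (act (w ! 1) b)) (Dl h))"
  using MA unfolding module_algebra_def by auto
lemma act_unit: "act h uA = sA (eps h) uA" using MA unfolding module_algebra_def by auto

lemma act_zero[simp]: "act h 0 = 0" using act_add[of h 0 0] by simp
lemma act_zeroh[simp]: "act 0 x = 0" using act_addh[of 0 0 x] by simp
lemma mA_zerol[simp]: "mA 0 b = 0" using mA_addl[of 0 0 b] by simp
lemma act_sumh: "act (sum_list (map f xs)) x = (\<Sum>y\<leftarrow>xs. act (f y) x)"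
  by (induction xs) (auto simp: act_addh)
lemma mA_suml: "mA (sum_list (map f xs)) b = (\<Sum>y\<leftarrow>xs. mA (f y) b)"
  by (induction xs) (auto simp: mA_addl)

lemma inB: "b \<in> BB \<Longrightarrow> act h b = sA (eps h) b" by (simp add: BB_def invariants_def)

lemma act_mA_B:
  assumes b: "b \<in> BB" shows "act h (mA a b) = mA (act h a) b"
proof -
  have "act h (mA a b) = (\<Sum>w\<leftarrow>Dl h. mA (act (w ! 0) a) (act (w ! 1) b))" by (rule act_mA)
  also have "\<dots> = (\<Sum>w\<leftarrow>Dl h. mA (act (sc (eps (w ! 1)) (w ! 0)) a) b)"
    by (rule suml_cong) (simp add: inB[OF b] mA_scr mA_scl act_sc)
  also have "\<dots> = mA (act (\<Sum>w\<leftarrow>Dl h. sc (eps (w ! 1)) (w ! 0)) a) b"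
    by (simp add: act_sumh mA_suml)
  also have "\<dots> = mA (act h a) b" using cl[of h] by simp
  finally show ?thesis .
qed

lemma assocB:
  assumes b: "b \<in> BB" shows "mA (mA c a) b = mA c (mA a b)"
proof -
  define T where "T u = mA (act (u!0) c) (mA (act (u!1) a) b)" for u
  have M: "mlin sc 2 T"
    by (rule mlin2I) (simp_all add: T_def act_addh mA_addl mA_addr act_sc mA_scl mA_scr)
  have "mA (mA c a) b = (\<Sum>w\<leftarrow>Phi. T [sc (eps (w!2)) (w!0), w!1])"
    unfolding mA_assoc
    by (rule suml_cong) (simp add: T_def inB[OF b] mA_scr mA_scl act_sc)
  also have "\<dots> = T [1,1]" by (rule PHI_R[OF M])
  finally show ?thesis by (simp add: T_def)
qed

end

locale hm = ma sc Dl eps Phi Phinv sA act mA uA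
  for sc :: "'k::field \<Rightarrow> 'h::ring_1 \<Rightarrow> 'h" and Dl eps Phi Phinv
    and sA :: "'k \<Rightarrow> 'a::ab_group_add \<Rightarrow> 'a" and act mA uA +
  fixes sN :: "'k \<Rightarrow> 'n::ab_group_add \<Rightarrow> 'n" and hN :: "'h \<Rightarrow> 'n \<Rightarrow> 'n" and aN :: "'a \<Rightarrow> 'n \<Rightarrow> 'n"
  assumes HM: "hopf_module sc Dl Phi sA act mA uA UNIV (+) 0 sN hN aN"
begin

definition "NN = invariants sN eps hN"

lemma hmN: "hmodule sc UNIV (+) 0 sN hN" using HM by (simp add: hopf_module_def)
lemma sN_add: "sN c (x + y) = sN c x + sN c y" using hmN unfolding hmodule_def kvs_def by auto
lemma sN_addk: "sN (c + d) x = sN c x + sN d x" using hmN unfolding hmodule_def kvs_def by auto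
lemma sN_mult: "sN (c * d) x = sN c (sN d x)" using hmN unfolding hmodule_def kvs_def by auto
lemma sN_one[simp]: "sN 1 x = x" using hmN unfolding hmodule_def kvs_def by auto
lemma hN_addh: "hN (h + g) x = hN h x + hN g x" using hmN unfolding hmodule_def by auto
lemma hN_add: "hN h (x + y) = hN h x + hN h y" using hmN unfolding hmodule_def by auto
lemma hN_sc: "hN (sc c h) x = sN c (hN h x)" using hmN unfolding hmodule_def by auto
lemma hN_sN: "hN h (sN c x) = sN c (hN h x)" using hmN unfolding hmodule_def by auto
lemma aN_addl: "aN (a + a') x = aN a x + aN a' x" using HM unfolding hopf_module_def by auto
lemma aN_addr: "aN a (x + y) = aN a x + aN a y" using HM unfolding hopf_module_def by auto
lemma aN_scl: "aN (sA c a) x = sN c (aN a x)" using HM unfolding hopf_module_def by auto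
lemma aN_scr: "aN a (sN c x) = sN c (aN a x)" using HM unfolding hopf_module_def by auto
lemma aN_assoc: "aN (mA a b) x =
        sum_list (map (\<lambda>w. aN (act (w ! 0) a) (aN (act (w ! 1) b) (hN (w ! 2) x))) Phi)"
  using HM unfolding hopf_module_def by (simp add: gsum_sum)
lemma hN_aN: "hN h (aN a x) = sum_list (map (\<lambda>w. aN (act (w ! 0) a) (hN (w ! 1) x)) (Dl h))"
  using HM unfolding hopf_module_def by (simp add: gsum_sum)
lemma aN_unit[simp]: "aN uA x = x" using HM unfolding hopf_module_def by auto

lemma sN_zero[simp]: "sN c 0 = 0" using sN_add[of c 0 0] by simp
lemma sN_zerok[simp]: "sN 0 x = 0" using sN_addk[of 0 0 x] by simp
lemma hN_zero[simp]: "hN h 0 = 0" using hN_add[of h 0 0] by simp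
lemma aN_zerol[simp]: "aN 0 x = 0" using aN_addl[of 0 0 x] by simp
lemma aN_zeror[simp]: "aN a 0 = 0" using aN_addr[of a 0 0] by simp
lemma sN_neg: "sN c (- x) = - sN c x" by (metis add_eq_0_iff sN_add sN_zero add.right_inverse)
lemma hN_neg: "hN h (- x) = - hN h x" by (metis add_eq_0_iff hN_add hN_zero add.right_inverse)
lemma sN_sumk: "sN (sum_list (map f xs)) x = (\<Sum>y\<leftarrow>xs. sN (f y) x)"
  by (induction xs) (auto simp: sN_addk)
lemma sN_sum: "sN c (sum_list (map f xs)) = (\<Sum>y\<leftarrow>xs. sN c (f y))"
  by (induction xs) (auto simp: sN_add)
lemma hN_sum: "hN h (sum_list (map f xs)) = (\<Sum>y\<leftarrow>xs. hN h (f y))"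
  by (induction xs) (auto simp: hN_add)
lemma aN_suml: "aN (sum_list (map f xs)) x = (\<Sum>y\<leftarrow>xs. aN (f y) x)"
  by (induction xs) (auto simp: aN_addl)

lemma sN_comm: "sN c (sN d x) = sN d (sN c x)" by (metis sN_mult mult.commute)

lemma inN: "y \<in> NN \<Longrightarrow> hN h y = sN (eps h) y" by (simp add: NN_def invariants_def)

lemma aN_mA_NN:
  assumes y: "y \<in> NN" shows "aN (mA a b) y = aN a (aN b y)"
proof -
  define T where "T u = aN (act (u!0) a) (aN (act (u!1) b) y)" for u
  have M: "mlin sc 2 T"
    by (rule mlin2I) (simp_all add: T_def act_addh aN_addl aN_addr act_sc aN_scl aN_scr)
  have "aN (mA a b) y = (\<Sum>w\<leftarrow>Phi. T [sc (eps (w!2)) (w!0), w!1])"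
    unfolding aN_assoc
    by (rule suml_cong) (simp add: T_def inN[OF y] aN_scr aN_scl act_sc)
  also have "\<dots> = T [1,1]" by (rule PHI_R[OF M])
  finally show ?thesis by (simp add: T_def)
qed

lemma hN_aN_NN:
  assumes y: "y \<in> NN" shows "hN h (aN a y) = aN (act h a) y"
proof -
  have "hN h (aN a y) = (\<Sum>w\<leftarrow>Dl h. aN (act (sc (eps (w ! 1)) (w ! 0)) a) y)"
    unfolding hN_aN by (rule suml_cong) (simp add: inN[OF y] aN_scr act_sc aN_scl)
  also have "\<dots> = aN (act (\<Sum>w\<leftarrow>Dl h. sc (eps (w ! 1)) (w ! 0)) a) y"
    by (simp add: act_sumh aN_suml)
  also have "\<dots> = aN (act h a) y" by (simp only: cl)
  finally show ?thesis .
qed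

lemma NN_add: "x \<in> NN \<Longrightarrow> y \<in> NN \<Longrightarrow> x + y \<in> NN"
  by (simp add: NN_def invariants_def hN_add sN_add)
lemma NN_zero: "0 \<in> NN" by (simp add: NN_def invariants_def)
lemma NN_neg: "x \<in> NN \<Longrightarrow> - x \<in> NN"
  by (simp add: NN_def invariants_def hN_neg sN_neg)

lemma aN_B_NN:
  assumes b: "b \<in> BB" and y: "y \<in> NN" shows "aN b y \<in> NN"
proof -
  have "hN h (aN b y) = sN (eps h) (aN b y)" for h
  proof -
    have "hN h (aN b y) = (\<Sum>w\<leftarrow>Dl h. sN (eps (w!0) * eps (w!1)) (aN b y))"
      unfolding hN_aN by (rule suml_cong) (simp add: inN[OF y] inB[OF b] aN_scr aN_scl sN_mult sN_comm)
    also have "\<dots> = sN (eps h) (aN b y)" by (simp add: sN_sumk eps_Dl[of h])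
    finally show ?thesis .
  qed
  then show ?thesis by (simp add: NN_def invariants_def)
qed

lemma bmodule_NN: "bmodule BB mA uA NN (+) 0 aN"
  unfolding bmodule_def abgrp_def
  using NN_add NN_zero NN_neg aN_B_NN
  by (auto simp: aN_addl aN_addr aN_mA_NN add.assoc add.commute intro!: bexI[of _ "- _"])

end

lemma tcls_eq: "tcls R xs = tcls R ys \<longleftrightarrow> teq R xs ys"
proof
  assume "tcls R xs = tcls R ys"
  then have "ys \<in> tcls R xs" by (simp add: tcls_def)
  then show "teq R xs ys" by (simp add: tcls_def)
next
  assume "teq R xs ys"
  then show "tcls R xs = tcls R ys"
    unfolding tcls_def using teq_trans teq_sym by blast
qed

lemma trep_cls: "teq R xs (trep (tcls R xs))"
proof -
  have "xs \<in> tcls R xs" by (simp add: tcls_def)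
  then have "trep (tcls R xs) \<in> tcls R xs" unfolding trep_def by (rule someI)
  then show ?thesis by (simp add: tcls_def)
qed

lemma cls_trep[simp]: "tcls R (trep (tcls R xs)) = tcls R xs"
  using trep_cls[of R xs] tcls_eq teq_sym by metis

lemma tcls_in[simp]: "tcls R xs \<in> tcarrier R" by (simp add: tcarrier_def)

lemma carrier_cls: "X \<in> tcarrier R \<Longrightarrow> X = tcls R (trep X)"
  by (auto simp: tcarrier_def)

lemma ball_carrier: "(\<forall>X\<in>tcarrier R. P X) \<longleftrightarrow> (\<forall>xs. P (tcls R xs))"
  by (auto simp: tcarrier_def)

lemma tplus_cls[simp]: "tplus R (tcls R xs) (tcls R ys) = tcls R (xs @ ys)"
  unfolding tplus_def tcls_eq
  by (rule teq_append; rule teq_sym, rule trep_cls)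

lemma gsum_cls: "gsum (tplus R) (tzero R) (map (\<lambda>w. tcls R (F w)) L) = tcls R (concat (map F L))"
  by (induction L) (auto simp: gsum_def tzero_def)

lemma lift_cls:
  assumes "\<And>xs ys. teq R xs ys \<Longrightarrow> teq R' (F xs) (F ys)"
  shows "tcls R' (F (trep (tcls R xs))) = tcls R' (F xs)"
  unfolding tcls_eq by (rule assms, rule teq_sym, rule trep_cls)

definition FM :: "('a \<Rightarrow> 'a) \<Rightarrow> ('a \<times> 'm) list \<Rightarrow> ('a \<times> 'm) list" where
  "FM f xs = map (\<lambda>(a, m). (f a, m)) xs"

lemma FM_append[simp]: "FM f (xs @ ys) = FM f xs @ FM f ys" by (simp add: FM_def)
lemma FM_comp: "FM f (FM g xs) = FM (\<lambda>a. f (g a)) xs" by (induction xs) (auto simp: FM_def)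
lemma FM_id: "FM (\<lambda>a. a) xs = xs" by (induction xs) (auto simp: FM_def)
lemma FM_cong: "(\<And>a. f a = g a) \<Longrightarrow> FM f xs = FM g xs" by (simp add: FM_def)

lemma bt_G1: "teq (btens_rel B mA bM) [(a+a', m)] [(a,m),(a',m)]"
proof -
  have e: "(\<lambda>y. fsum [(a+a',m)] y - fsum [(a,m),(a',m)] y) = (\<lambda>y. delta (a + a', m) y - delta (a, m) y - delta (a', m) y)"
    by (auto simp: fun_eq_iff fsum_def delta_def)
  show ?thesis unfolding teq_def e by (rule sg_gen) (unfold btens_rel_def, blast)
qed

lemma bt_G2: "teq (btens_rel B mA bM) [(a, m+m')] [(a,m),(a,m')]"
proof -
  have e: "(\<lambda>y. fsum [(a,m+m')] y - fsum [(a,m),(a,m')] y) = (\<lambda>y. delta (a, m + m') y - delta (a, m) y - delta (a, m') y)"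
    by (auto simp: fun_eq_iff fsum_def delta_def)
  show ?thesis unfolding teq_def e by (rule sg_gen) (unfold btens_rel_def, blast)
qed

lemma bt_G3: "b \<in> B \<Longrightarrow> teq (btens_rel B mA bM) [(mA a b, m)] [(a, bM b m)]"
proof -
  assume b: "b \<in> B"
  have e: "(\<lambda>y. fsum [(mA a b, m)] y - fsum [(a, bM b m)] y) = (\<lambda>y. delta (mA a b, m) y - delta (a, bM b m) y)"
    by (auto simp: fun_eq_iff fsum_def delta_def)
  show ?thesis unfolding teq_def e by (rule sg_gen) (unfold btens_rel_def, use b in blast)
qed

lemma bt_cases:
  assumes "g \<in> btens_rel B mA bM"
    and "\<And>a a' m. g = (\<lambda>y. delta (a + a', m) y - delta (a, m) y - delta (a', m) y) \<Longrightarrow> P"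
    and "\<And>a m m'. g = (\<lambda>y. delta (a, m + m') y - delta (a, m) y - delta (a, m') y) \<Longrightarrow> P"
    and "\<And>a b m. b \<in> B \<Longrightarrow> g = (\<lambda>y. delta (mA a b, m) y - delta (a, bM b m) y) \<Longrightarrow> P"
  shows P
  using assms unfolding btens_rel_def by blast

lemma bt_map:
  fixes f :: "'a::ab_group_add \<Rightarrow> 'a" and u :: "'m2::ab_group_add \<Rightarrow> 'm::ab_group_add"
  assumes f_add: "\<And>x y. f (x+y) = f x + f y" and f_B: "\<And>a b. b\<in>B \<Longrightarrow> f (mA a b) = mA (f a) b"
    and u_add: "\<And>x y. u (x+y) = u x + u y" and u_B: "\<And>b m. b\<in>B \<Longrightarrow> u (bM' b m) = bM b (u m)"
    and "teq (btens_rel B mA bM') xs ys"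
  shows "teq (btens_rel B mA bM) (map (\<lambda>(a,m). (f a, u m)) xs) (map (\<lambda>(a,m). (f a, u m)) ys)"
proof (rule teq_map_simple[OF _ assms(5)])
  fix g assume gin: "g \<in> btens_rel B mA bM'"
  show "\<exists>P N. g = (\<lambda>y. fsum P y - fsum N y) \<and>
      teq (btens_rel B mA bM) (map (\<lambda>(a,m). (f a, u m)) P) (map (\<lambda>(a,m). (f a, u m)) N)"
    apply (rule bt_cases[OF gin])
    subgoal for a a' m
      by (rule exI[of _ "[(a + a', m)]"], rule exI[of _ "[(a, m), (a', m)]"], rule conjI)
         (simp add: fun_eq_iff fsum_def delta_def, simp add: f_add bt_G1)
    subgoal for a m m'
      by (rule exI[of _ "[(a, m + m')]"], rule exI[of _ "[(a, m), (a, m')]"], rule conjI)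
         (simp add: fun_eq_iff fsum_def delta_def, simp add: u_add bt_G2)
    subgoal for a b m
      by (rule exI[of _ "[(mA a b, m)]"], rule exI[of _ "[(a, bM' b m)]"], rule conjI)
         (auto simp: fun_eq_iff fsum_def delta_def f_B u_B bt_G3)
    done
qed

lemma bt_zero:
  fixes B :: "'a::ab_group_add set"
  shows "teq (btens_rel B mA bM) [(0, m)] []"
proof -
  have "teq (btens_rel B mA bM) [(0,m),(0,m)] [(0,m)]" using teq_sym[OF bt_G1[of B mA bM 0 0 m]] by simp
  then show ?thesis unfolding teq_def by (rule sg_eqI) (simp add: fsum_def)
qed

lemma bt_sum:
  fixes B :: "'a::ab_group_add set"
  shows "teq (btens_rel B mA bM) [(sum_list (map f as), m)] (map (\<lambda>a. (f a, m)) as)"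
proof (induction as)
  case Nil then show ?case by (simp add: bt_zero)
next
  case (Cons a as)
  have "teq (btens_rel B mA bM) [(f a + sum_list (map f as), m)] ([(f a, m)] @ [(sum_list (map f as), m)])"
    using bt_G1 by simp
  moreover have "teq (btens_rel B mA bM) ([(f a, m)] @ [(sum_list (map f as), m)]) ([(f a, m)] @ map (\<lambda>a. (f a, m)) as)"
    by (rule teq_append[OF teq_refl Cons])
  ultimately show ?case by (simp add: teq_trans)
qed

lemma mset_concat_cons: "mset (concat (map (\<lambda>w. h w # r w) L)) = mset (map h L) + mset (concat (map r L))"
  by (induction L) auto

locale tens = ma sc Dl eps Phi Phinv sA act mA uA
  for sc :: "'k::field \<Rightarrow> 'h::ring_1 \<Rightarrow> 'h" and Dl eps Phi Phinv
    and sA :: "'k \<Rightarrow> 'a::ab_group_add \<Rightarrow> 'a" and act mA uA +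
  fixes bM :: "'a \<Rightarrow> 'm::ab_group_add \<Rightarrow> 'm"
begin

abbreviation "G \<equiv> btens_rel BB mA bM"

definition respF :: "('a \<Rightarrow> 'a) \<Rightarrow> bool" where
  "respF f \<longleftrightarrow> (\<forall>x y. f (x+y) = f x + f y) \<and> (\<forall>a. \<forall>b\<in>BB. f (mA a b) = mA (f a) b)"

lemma teq_FM: "respF f \<Longrightarrow> teq G xs ys \<Longrightarrow> teq G (FM f xs) (FM f ys)"
  using bt_map[of f BB mA "\<lambda>x. x" bM bM xs ys] unfolding FM_def respF_def by simp

lemma cls_FM: "respF f \<Longrightarrow> tcls G (FM f (trep (tcls G xs))) = tcls G (FM f xs)"
  by (rule lift_cls) (rule teq_FM)

lemma resp_sA: "respF (sA c)" by (simp add: respF_def sA_add mA_scl)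
lemma resp_act: "respF (act h)" by (simp add: respF_def act_add act_mA_B)
lemma resp_mA: "respF (mA c)" by (simp add: respF_def mA_addr assocB)

lemma tscal_cls[simp]: "tscal G sA c (tcls G xs) = tcls G (FM (sA c) xs)"
  unfolding tscal_def FM_def[symmetric] by (rule cls_FM[OF resp_sA])
lemma thact_cls[simp]: "thact G act h (tcls G xs) = tcls G (FM (act h) xs)"
  unfolding thact_def FM_def[symmetric] by (rule cls_FM[OF resp_act])
lemma taact_cls[simp]: "taact G mA c (tcls G xs) = tcls G (FM (mA c) xs)"
  unfolding taact_def FM_def[symmetric] by (rule cls_FM[OF resp_mA])

lemma FM_plus:
  assumes "\<And>a. f a = g a + k a"
  shows "tcls G (FM f xs) = tcls G (FM g xs @ FM k xs)"
  unfolding tcls_eq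
proof (induction xs)
  case Nil then show ?case by (simp add: FM_def)
next
  case (Cons x xs)
  obtain a m where x: "x = (a, m)" by (cases x)
  have "teq G ([(f a, m)] @ FM f xs) ([(g a, m), (k a, m)] @ (FM g xs @ FM k xs))"
    by (rule teq_append[OF _ Cons]) (simp add: assms bt_G1)
  moreover have "teq G ([(g a, m), (k a, m)] @ (FM g xs @ FM k xs)) (FM g (x # xs) @ FM k (x # xs))"
    by (rule teq_mset) (simp add: x FM_def)
  ultimately show ?case by (simp add: x FM_def teq_trans)
qed

lemma FM_zero: "tcls G (FM (\<lambda>a. 0) xs) = tcls G []"
  unfolding tcls_eq
proof (induction xs)
  case Nil then show ?case by (simp add: FM_def)
next
  case (Cons x xs)
  obtain a m where x: "x = (a, m)" by (cases x)
  have "teq G ([(0, m)] @ FM (\<lambda>a. 0) xs) ([] @ [])"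
    by (rule teq_append[OF bt_zero Cons])
  then show ?case by (simp add: x FM_def)
qed

lemma FM_summap:
  assumes "\<And>a. f a = sum_list (map (\<lambda>w. g w a) L)"
  shows "tcls G (FM f xs) = tcls G (concat (map (\<lambda>w. FM (g w) xs) L))"
  unfolding tcls_eq
proof (induction xs)
  case Nil
  have e1: "concat (map (\<lambda>w. FM (g w) []) L) = []" by (induction L) (auto simp: FM_def)
  have e2: "FM f [] = []" by (simp add: FM_def)
  show ?case by (simp only: e1 e2 teq_refl)
next
  case (Cons x xs)
  obtain a m where x: "x = (a, m)" by (cases x)
  have "teq G ([(f a, m)] @ FM f xs) (map (\<lambda>w. (g w a, m)) L @ concat (map (\<lambda>w. FM (g w) xs) L))"
    by (rule teq_append[OF _ Cons]) (simp add: assms bt_sum)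
  moreover have "teq G (map (\<lambda>w. (g w a, m)) L @ concat (map (\<lambda>w. FM (g w) xs) L))
      (concat (map (\<lambda>w. FM (g w) (x # xs)) L))"
    by (rule teq_mset) (simp add: x FM_def mset_concat_cons)
  ultimately show ?case by (simp add: x FM_def teq_trans)
qed

lemma gsum_cls0: "gsum (tplus R) (tcls R []) (map (\<lambda>w. tcls R (F w)) L) = tcls R (concat (map F L))"
  using gsum_cls[of R F L] by (simp add: tzero_def)

lemma tcls_comm: "tcls G (xs @ ys) = tcls G (ys @ xs)"
  unfolding tcls_eq by (rule teq_mset) simp

lemma FM_neg: "tcls G (xs @ FM uminus xs) = tcls G []"
proof -
  have "tcls G (xs @ FM uminus xs) = tcls G (FM (\<lambda>a. a) xs @ FM uminus xs)" by (simp add: FM_id)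
  also have "\<dots> = tcls G (FM (\<lambda>a. 0) xs)" by (rule FM_plus[symmetric]) simp
  also have "\<dots> = tcls G []" by (rule FM_zero)
  finally show ?thesis .
qed

lemma tens_hopf:
  "hopf_module sc Dl Phi sA act mA uA (tcarrier G) (tplus G) (tzero G) (tscal G sA) (thact G act) (taact G mA)"
  unfolding hopf_module_def hmodule_def kvs_def abgrp_def ball_carrier
  apply (intro conjI allI)
  apply (simp_all add: tzero_def FM_comp)
  subgoal by (rule tcls_comm)
  subgoal for xs by (rule bexI[of _ "tcls G (FM uminus xs)"]) (simp_all add: FM_neg)
  subgoal by (rule FM_plus) (simp add: sA_addk)
  subgoal by (simp add: FM_def sA_mult)
  subgoal by (simp add: FM_def)
  subgoal by (rule FM_plus) (simp add: act_addh)
  subgoal by (simp add: FM_def act_sc)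
  subgoal by (simp add: FM_def act_sA)
  subgoal by (simp add: FM_def act_mult)
  subgoal by (simp add: FM_def)
  subgoal by (rule FM_plus) (simp add: mA_addl)
  subgoal by (simp add: FM_def mA_scl)
  subgoal by (simp add: FM_def mA_scr)
  subgoal unfolding gsum_cls0 by (rule FM_summap) (simp add: mA_assoc)
  subgoal unfolding gsum_cls0 by (rule FM_summap) (simp add: act_mA)
  subgoal by (simp add: FM_def)
  done

end

locale adj = tens sc Dl eps Phi Phinv sA act mA uA bM + hm sc Dl eps Phi Phinv sA act mA uA sN hN aN
  for sc :: "'k::field \<Rightarrow> 'h::ring_1 \<Rightarrow> 'h" and Dl eps Phi Phinv
    and sA :: "'k \<Rightarrow> 'a::ab_group_add \<Rightarrow> 'a" and act mA uA
    and bM :: "'a \<Rightarrow> 'm::ab_group_add \<Rightarrow> 'm"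
    and sN :: "'k \<Rightarrow> 'n::ab_group_add \<Rightarrow> 'n" and hN aN
begin

definition Phm :: "('m \<Rightarrow> 'n) \<Rightarrow> ('a \<times> 'm) list \<Rightarrow> 'n" where
  "Phm g xs = sum_list (map (\<lambda>(a, m). aN a (g m)) xs)"

definition "bhom g \<longleftrightarrow> g \<in> bmod_homs BB UNIV (+) bM NN (+) aN"

lemma bhomD:
  assumes "bhom g"
  shows "g x \<in> NN" "g (x + y) = g x + g y" "b \<in> BB \<Longrightarrow> g (bM b x) = aN b (g x)"
  using assms by (auto simp: bhom_def bmod_homs_def)

lemma Phm_append[simp]: "Phm g (xs @ ys) = Phm g xs + Phm g ys" by (simp add: Phm_def)

lemma WD:
  assumes g: "bhom g" and "teq G xs ys"
  shows "Phm g xs = Phm g ys"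
  unfolding Phm_def
proof (rule teq_fun_gen[OF _ assms(2)])
  fix r assume rin: "r \<in> G"
  show "\<exists>P N. r = (\<lambda>y. fsum P y - fsum N y) \<and>
      sum_list (map (\<lambda>(a, m). aN a (g m)) P) = sum_list (map (\<lambda>(a, m). aN a (g m)) N)"
    apply (rule bt_cases[OF rin])
    subgoal for a a' m
      by (rule exI[of _ "[(a + a', m)]"], rule exI[of _ "[(a, m), (a', m)]"], rule conjI)
         (simp add: fun_eq_iff fsum_def delta_def, simp add: aN_addl)
    subgoal for a m m'
      by (rule exI[of _ "[(a, m + m')]"], rule exI[of _ "[(a, m), (a, m')]"], rule conjI)
         (simp add: fun_eq_iff fsum_def delta_def, simp add: aN_addr bhomD(2)[OF g])
    subgoal for a b m
      by (rule exI[of _ "[(mA a b, m)]"], rule exI[of _ "[(a, bM b m)]"])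
         (auto simp: fun_eq_iff fsum_def delta_def aN_mA_NN bhomD[OF g])
    done
qed

lemma inv_cls: "bhom g \<Longrightarrow> adj_inv_map G aN g (tcls G xs) = Phm g xs"
  unfolding adj_inv_map_def Phm_def[symmetric]
  using WD[OF _ teq_sym[OF trep_cls]] by simp

lemma Phm_sA: "bhom g \<Longrightarrow> Phm g (FM (sA c) xs) = sN c (Phm g xs)"
  by (induction xs) (auto simp: Phm_def FM_def aN_scl sN_add)
lemma Phm_act: "bhom g \<Longrightarrow> Phm g (FM (act h) xs) = hN h (Phm g xs)"
  by (induction xs) (auto simp: Phm_def FM_def hN_add hN_aN_NN bhomD)
lemma Phm_mA: "bhom g \<Longrightarrow> Phm g (FM (mA c) xs) = aN c (Phm g xs)"
  by (induction xs) (auto simp: Phm_def FM_def aN_addr aN_mA_NN bhomD)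

abbreviation "HH \<equiv> hopf_homs (tcarrier G) (tplus G) (tscal G sA) (thact G act) (taact G mA) UNIV (+) sN hN aN"

lemma inv_hom: "bhom g \<Longrightarrow> adj_inv_map G aN g \<in> HH"
  unfolding hopf_homs_def ball_carrier
  by (auto simp: inv_cls Phm_sA Phm_act Phm_mA) (simp add: adj_inv_map_def)

lemma unit_inv: "bhom g \<Longrightarrow> adj_unit_map G uA (adj_inv_map G aN g) = g"
  by (rule ext) (simp add: adj_unit_map_def inv_cls Phm_def)

lemma HHD:
  assumes "f \<in> HH"
  shows "f (tcls G (xs @ ys)) = f (tcls G xs) + f (tcls G ys)"
    "f (tcls G (FM (sA c) xs)) = sN c (f (tcls G xs))"
    "f (tcls G (FM (act h) xs)) = hN h (f (tcls G xs))"
    "f (tcls G (FM (mA a) xs)) = aN a (f (tcls G xs))"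
    "X \<notin> tcarrier G \<Longrightarrow> f X = undefined"
  using assms unfolding hopf_homs_def ball_carrier
  by (auto simp del: tplus_cls simp add: tplus_cls[symmetric])

lemma unit_hom:
  assumes f: "f \<in> HH" shows "bhom (adj_unit_map G uA f)"
  unfolding bhom_def bmod_homs_def adj_unit_map_def
proof (intro CollectI conjI ballI allI impI)
  fix m :: 'm
  have "hN h (f (tcls G [(uA, m)])) = sN (eps h) (f (tcls G [(uA, m)]))" for h
  proof -
    have "hN h (f (tcls G [(uA, m)])) = f (tcls G (FM (act h) [(uA, m)]))" by (simp add: HHD[OF f])
    also have "\<dots> = f (tcls G (FM (sA (eps h)) [(uA, m)]))" by (simp add: FM_def act_unit)
    also have "\<dots> = sN (eps h) (f (tcls G [(uA, m)]))" by (simp add: HHD[OF f])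
    finally show ?thesis .
  qed
  then show "f (tcls G [(uA, m)]) \<in> NN" by (simp add: NN_def invariants_def)
next
  fix x y :: 'm
  have "tcls G [(uA, x + y)] = tcls G ([(uA, x)] @ [(uA, y)])"
    unfolding tcls_eq by (simp add: bt_G2)
  then show "f (tcls G [(uA, x + y)]) = f (tcls G [(uA, x)]) + f (tcls G [(uA, y)])"
    by (simp only: HHD(1)[OF f])
next
  fix b x assume b: "b \<in> BB"
  have "tcls G [(uA, bM b x)] = tcls G (FM (mA b) [(uA, x)])"
    unfolding tcls_eq using teq_sym[OF bt_G3[OF b, of mA bM uA x]] by (simp add: FM_def)
  then show "f (tcls G [(uA, bM b x)]) = aN b (f (tcls G [(uA, x)]))"
    by (simp only: HHD(4)[OF f])
qed simp

lemma f_sum: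
  assumes f: "f \<in> HH"
  shows "sum_list (map (\<lambda>(a, m). aN a (f (tcls G [(uA, m)]))) ys) = f (tcls G ys)"
proof (induction ys)
  case Nil
  have "f (tcls G []) = f (tcls G []) + f (tcls G [])" using HHD(1)[OF f, of "[]" "[]"] by simp
  then show ?case by simp
next
  case (Cons x ys)
  obtain a m where x: "x = (a, m)" by (cases x)
  have "f (tcls G (x # ys)) = f (tcls G [(a, m)]) + f (tcls G ys)"
    using HHD(1)[OF f, of "[(a, m)]" ys] by (simp add: x)
  also have "f (tcls G [(a, m)]) = aN a (f (tcls G [(uA, m)]))"
    using HHD(4)[OF f, of a "[(uA, m)]"] by (simp add: FM_def)
  finally show ?case using Cons by (simp add: x)
qed

lemma inv_unit:
  assumes f: "f \<in> HH" shows "adj_inv_map G aN (adj_unit_map G uA f) = f"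
proof (rule ext)
  fix X
  show "adj_inv_map G aN (adj_unit_map G uA f) X = f X"
  proof (cases "X \<in> tcarrier G")
    case True
    then show ?thesis
      unfolding adj_inv_map_def adj_unit_map_def
      using f_sum[OF f, of "trep X"] carrier_cls[OF True] by simp
  next
    case False
    then show ?thesis by (simp add: adj_inv_map_def HHD(5)[OF f])
  qed
qed

lemma bij: "bij_betw (adj_unit_map G uA) HH (bmod_homs BB UNIV (+) bM NN (+) aN)"
proof (rule bij_betw_byWitness[where f' = "adj_inv_map G aN"])
  show "\<forall>f\<in>HH. adj_inv_map G aN (adj_unit_map G uA f) = f" using inv_unit by blast
  show "\<forall>g\<in>bmod_homs BB UNIV (+) bM NN (+) aN. adj_unit_map G uA (adj_inv_map G aN g) = g"
    using unit_inv by (auto simp: bhom_def)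
  show "adj_unit_map G uA ` HH \<subseteq> bmod_homs BB UNIV (+) bM NN (+) aN"
    using unit_hom by (auto simp: bhom_def)
  show "adj_inv_map G aN ` bmod_homs BB UNIV (+) bM NN (+) aN \<subseteq> HH"
    using inv_hom by (auto simp: bhom_def)
qed

end

context adj
begin

lemma tmap_part:
  fixes bM' :: "'a \<Rightarrow> 'm2::ab_group_add \<Rightarrow> 'm2" and u :: "'m2 \<Rightarrow> 'm"
  assumes u: "u \<in> bmod_homs BB UNIV (+) bM' UNIV (+) bM"
  shows "tmap G (btens_rel BB mA bM') u \<in> hopf_homs (tcarrier (btens_rel BB mA bM')) (tplus (btens_rel BB mA bM'))
            (tscal (btens_rel BB mA bM') sA) (thact (btens_rel BB mA bM') act) (taact (btens_rel BB mA bM') mA)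
            (tcarrier G) (tplus G) (tscal G sA) (thact G act) (taact G mA)
     \<and> (\<forall>f\<in>HH. adj_unit_map (btens_rel BB mA bM') uA (restrict (f \<circ> tmap G (btens_rel BB mA bM') u) (tcarrier (btens_rel BB mA bM')))
            = adj_unit_map G uA f \<circ> u)"
proof -
  interpret T2: tens sc Dl eps Phi Phinv sA act mA uA bM' by unfold_locales
  let ?G' = "btens_rel BB mA bM'"
  let ?U = "\<lambda>xs. map (\<lambda>(a, m). (a, u m)) xs"
  have u_add: "\<And>x y. u (x + y) = u x + u y" and u_B: "\<And>b m. b \<in> BB \<Longrightarrow> u (bM' b m) = bM b (u m)"
    using u by (auto simp: bmod_homs_def)
  have resp: "\<And>xs ys. teq ?G' xs ys \<Longrightarrow> teq G (?U xs) (?U ys)"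
    using bt_map[of "\<lambda>x. x" BB mA u bM' bM] u_add u_B by simp
  have tm: "\<And>xs. tmap G ?G' u (tcls ?G' xs) = tcls G (?U xs)"
    unfolding tmap_def using lift_cls[of ?G' G ?U, OF resp] by simp
  have ext_tm: "\<And>X. X \<notin> tcarrier ?G' \<Longrightarrow> tmap G ?G' u X = undefined" by (simp add: tmap_def)
  have UF: "\<And>f xs. ?U (FM f xs) = FM f (?U xs)" by (simp add: FM_def split_def)
  show ?thesis
  proof (intro conjI ballI)
    show "tmap G ?G' u \<in> hopf_homs (tcarrier ?G') (tplus ?G') (tscal ?G' sA) (thact ?G' act) (taact ?G' mA)
            (tcarrier G) (tplus G) (tscal G sA) (thact G act) (taact G mA)"
      unfolding hopf_homs_def ball_carrier
      using ext_tm by (auto simp: tm UF)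
  next
    fix f
    show "adj_unit_map ?G' uA (restrict (f \<circ> tmap G ?G' u) (tcarrier ?G')) = adj_unit_map G uA f \<circ> u"
      by (rule ext) (simp add: adj_unit_map_def tm)
  qed
qed

end

locale adjv = adj sc Dl eps Phi Phinv sA act mA uA bM sN hN aN
  for sc :: "'k::field \<Rightarrow> 'h::ring_1 \<Rightarrow> 'h" and Dl eps Phi Phinv
    and sA :: "'k \<Rightarrow> 'a::ab_group_add \<Rightarrow> 'a" and act mA uA
    and bM :: "'a \<Rightarrow> 'm::ab_group_add \<Rightarrow> 'm"
    and sN :: "'k \<Rightarrow> 'n::ab_group_add \<Rightarrow> 'n" and hN aN +
  fixes sN' :: "'k \<Rightarrow> 'n2::ab_group_add \<Rightarrow> 'n2" and hN' aN'
  assumes HM2: "hopf_module sc Dl Phi sA act mA uA UNIV (+) 0 sN' hN' aN'"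
begin

interpretation H2: hm sc Dl eps Phi Phinv sA act mA uA sN' hN' aN'
  by unfold_locales (rule HM2)

lemma v_part:
  assumes v: "v \<in> hopf_homs UNIV (+) sN hN aN UNIV (+) sN' hN' aN'"
  shows "restrict v NN \<in> bmod_homs BB NN (+) aN (invariants sN' eps hN') (+) aN'
     \<and> (\<forall>f\<in>HH. adj_unit_map G uA (restrict (v \<circ> f) (tcarrier G)) = v \<circ> adj_unit_map G uA f)"
proof -
  have v_add: "\<And>x y. v (x + y) = v x + v y" and v_sN: "\<And>c x. v (sN c x) = sN' c (v x)"
    and v_hN: "\<And>h x. v (hN h x) = hN' h (v x)" and v_aN: "\<And>a x. v (aN a x) = aN' a (v x)"
    using v by (auto simp: hopf_homs_def)
  have vNN: "\<And>x. x \<in> NN \<Longrightarrow> v x \<in> invariants sN' eps hN'"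
    by (simp add: invariants_def v_hN[symmetric] v_sN[symmetric] inN)
  show ?thesis
  proof (intro conjI ballI)
    show "restrict v NN \<in> bmod_homs BB NN (+) aN (invariants sN' eps hN') (+) aN'"
      unfolding bmod_homs_def
      using vNN NN_add aN_B_NN by (auto simp: v_add v_aN)
  next
    fix f
    show "adj_unit_map G uA (restrict (v \<circ> f) (tcarrier G)) = v \<circ> adj_unit_map G uA f"
      by (rule ext) (simp add: adj_unit_map_def)
  qed
qed

end

theorem mainTheorem1:
  fixes sc :: "'k::field \<Rightarrow> 'h::ring_1 \<Rightarrow> 'h"
    and Dl :: "'h \<Rightarrow> 'h list list" and eps :: "'h \<Rightarrow> 'k"
    and Phi Phinv :: "'h list list"
    and sA :: "'k \<Rightarrow> 'a::ab_group_add \<Rightarrow> 'a" and act :: "'h \<Rightarrow> 'a \<Rightarrow> 'a"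
    and mA :: "'a \<Rightarrow> 'a \<Rightarrow> 'a" and uA :: 'a
    and bM :: "'a \<Rightarrow> 'm::ab_group_add \<Rightarrow> 'm"
    and bM' :: "'a \<Rightarrow> 'm2::ab_group_add \<Rightarrow> 'm2"
    and sN :: "'k \<Rightarrow> 'n::ab_group_add \<Rightarrow> 'n" and hN :: "'h \<Rightarrow> 'n \<Rightarrow> 'n" and aN :: "'a \<Rightarrow> 'n \<Rightarrow> 'n"
    and sN' :: "'k \<Rightarrow> 'n2::ab_group_add \<Rightarrow> 'n2" and hN' :: "'h \<Rightarrow> 'n2 \<Rightarrow> 'n2"
    and aN' :: "'a \<Rightarrow> 'n2 \<Rightarrow> 'n2"
    and B :: "'a set" and G :: "('a \<times> 'm \<Rightarrow> int) set" and G' :: "('a \<times> 'm2 \<Rightarrow> int) set"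
    and NH :: "'n set" and NH' :: "'n2 set"
  defines "B \<equiv> invariants sA eps act"
    and "G \<equiv> btens_rel B mA bM"
    and "G' \<equiv> btens_rel B mA bM'"
    and "NH \<equiv> invariants sN eps hN"
    and "NH' \<equiv> invariants sN' eps hN'"
  assumes H: "quasi_bialgebra sc Dl eps Phi Phinv"
    and A: "module_algebra sc Dl eps Phi sA act mA uA"
    and M: "bmodule B mA uA UNIV (+) 0 bM"
    and M': "bmodule B mA uA UNIV (+) 0 bM'"
    and N: "hopf_module sc Dl Phi sA act mA uA UNIV (+) 0 sN hN aN"
    and N': "hopf_module sc Dl Phi sA act mA uA UNIV (+) 0 sN' hN' aN'"
  shows
    "(hopf_module sc Dl Phi sA act mA uA (tcarrier G) (tplus G) (tzero G)
        (tscal G sA) (thact G act) (taact G mA))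
   \<and> (bmodule B mA uA NH (+) 0 aN)
   \<and> (bij_betw (adj_unit_map G uA)
       (hopf_homs (tcarrier G) (tplus G) (tscal G sA) (thact G act) (taact G mA) UNIV (+) sN hN aN)
       (bmod_homs B UNIV (+) bM NH (+) aN))
   \<and> (\<forall>g \<in> bmod_homs B UNIV (+) bM NH (+) aN.
       adj_inv_map G aN g
         \<in> hopf_homs (tcarrier G) (tplus G) (tscal G sA) (thact G act) (taact G mA) UNIV (+) sN hN aN
       \<and> adj_unit_map G uA (adj_inv_map G aN g) = g)
   \<and> (\<forall>f \<in> hopf_homs (tcarrier G) (tplus G) (tscal G sA) (thact G act) (taact G mA) UNIV (+) sN hN aN.
       adj_inv_map G aN (adj_unit_map G uA f) = f)
   \<and> (\<forall>u \<in> bmod_homs B UNIV (+) bM' UNIV (+) bM.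
       tmap G G' u \<in> hopf_homs (tcarrier G') (tplus G') (tscal G' sA) (thact G' act) (taact G' mA)
                        (tcarrier G) (tplus G) (tscal G sA) (thact G act) (taact G mA)
     \<and> (\<forall>f \<in> hopf_homs (tcarrier G) (tplus G) (tscal G sA) (thact G act) (taact G mA) UNIV (+) sN hN aN.
          adj_unit_map G' uA (restrict (f \<circ> tmap G G' u) (tcarrier G')) = adj_unit_map G uA f \<circ> u))
   \<and> (\<forall>v \<in> hopf_homs UNIV (+) sN hN aN UNIV (+) sN' hN' aN'.
       restrict v NH \<in> bmod_homs B NH (+) aN NH' (+) aN'
     \<and> (\<forall>f \<in> hopf_homs (tcarrier G) (tplus G) (tscal G sA) (thact G act) (taact G mA) UNIV (+) sN hN aN.
          adj_unit_map G uA (restrict (v \<circ> f) (tcarrier G)) = v \<circ> adj_unit_map G uA f))"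
  proof -
  interpret Q: adjv sc Dl eps Phi Phinv sA act mA uA bM sN hN aN sN' hN' aN'
    by unfold_locales (auto intro: H A N N')
  have eB: "B = Q.BB" unfolding B_def Q.BB_def ..
  have eN: "NH = Q.NN" unfolding NH_def Q.NN_def ..
  have eG: "G = btens_rel Q.BB mA bM" unfolding G_def eB ..
  have eG': "G' = btens_rel Q.BB mA bM'" unfolding G'_def eB ..
  show ?thesis unfolding eB eN eG eG' NH'_def
    apply (intro conjI ballI)
    subgoal by (rule Q.tens_hopf)
    subgoal by (rule Q.bmodule_NN)
    subgoal by (rule Q.bij)
    subgoal using Q.inv_hom by (auto simp: Q.bhom_def)
    subgoal using Q.unit_inv by (auto simp: Q.bhom_def)
    subgoal by (rule Q.inv_unit)
    subgoal for u using Q.tmap_part[where u=u and bM'=bM'] by blast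
    subgoal for u f using Q.tmap_part[where u=u and bM'=bM'] by blast
    subgoal for v using Q.v_part[where v=v] by blast
    subgoal for v f using Q.v_part[where v=v] by blast
    done
qed

end
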